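(* Let $P$ be a connected polyomino with consistent parity and without holes. Define $L_1=B(P,1)\setminus P$ and $L_{-1}=P\setminus B(P,-1)$. Then $G(L_1)$ and $G(L_{-1})$ both have a Hamiltonian cycle of even length.
   Context: A cell is a unit square $[i,i+1]\times[j,j+1]$ with $i,j\in\mathbb{Z}$. A polyomino is a finite union of cells. For a union $X$ of cells (up to boundary), $G(X)$ is the graph whose vertices are the cells of $X$, with two cells adjacent if they share an edge. $P$ is connected if $G(P)$ is connected. A polyomino $P$ has consistent parity if all first coordinates of its corners have the same parity and all second coordinates of its corners have the same parity. Distances use the $L_\infty$-norm. For $A\subseteq\mathbb{R}^2$ and $r\ge 0$, $B(A,r)=\{x:\mathrm{dist}(x,A)\le r\}$. For $r<0$, $B(A,r)=B(A^c,-r)^c$. *)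

theory Defs
  imports "HOL-Analysis.Analysis"
begin

text \<open>A cell [i,i+1] x [j,j+1] is identified with its lower-left corner (i,j).\<close>
type_synonym cell = "int \<times> int"

definition cell_pts :: "cell \<Rightarrow> (real \<times> real) set" where
  "cell_pts c = {(x,y). of_int (fst c) \<le> x \<and> x \<le> of_int (fst c) + 1 \<and>
                        of_int (snd c) \<le> y \<and> y \<le> of_int (snd c) + 1}"

text \<open>Open cell (interior), used for "union of cells up to boundary".\<close>
definition cell_open :: "cell \<Rightarrow> (real \<times> real) set" where
  "cell_open c = {(x,y). of_int (fst c) < x \<and> x < of_int (fst c) + 1 \<and>
                         of_int (snd c) < y \<and> y < of_int (snd c) + 1}"

definition region :: "cell set \<Rightarrow> (real \<times> real) set" where
  "region P = \<Union> (cell_pts ` P)"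

definition polyomino :: "cell set \<Rightarrow> bool" where
  "polyomino P \<longleftrightarrow> finite P \<and> P \<noteq> {}"

definition cells_of :: "(real \<times> real) set \<Rightarrow> cell set" where
  "cells_of X = {c. cell_open c \<subseteq> X}"

definition cell_adj :: "cell \<Rightarrow> cell \<Rightarrow> bool" where
  "cell_adj c d \<longleftrightarrow> \<bar>fst c - fst d\<bar> + \<bar>snd c - snd d\<bar> = 1"

definition graph_connected :: "cell set \<Rightarrow> bool" where
  "graph_connected S \<longleftrightarrow>
     (\<forall>c\<in>S. \<forall>d\<in>S. (\<lambda>u v. u \<in> S \<and> v \<in> S \<and> cell_adj u v)\<^sup>*\<^sup>* c d)"

definition ham_cycle :: "cell set \<Rightarrow> cell list \<Rightarrow> bool" where
  "ham_cycle S vs \<longleftrightarrow> distinct vs \<and> set vs = S \<and> length vs \<ge> 3 \<and>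
     (\<forall>i < length vs. cell_adj (vs ! i) (vs ! (Suc i mod length vs)))"

text \<open>Corners of a polyomino: lattice points at which the boundary turns (among the
  four cells around the point, an odd number lie in P, or exactly two diagonal ones).\<close>
definition corners :: "cell set \<Rightarrow> (int \<times> int) set" where
  "corners P = {(a,b).
     odd (card ({(a-1,b-1),(a,b-1),(a-1,b),(a,b)} \<inter> P)) \<or>
     (((a,b) \<in> P \<longleftrightarrow> (a-1,b-1) \<in> P) \<and> ((a-1,b) \<in> P \<longleftrightarrow> (a,b-1) \<in> P) \<and>
      ((a,b) \<in> P \<longleftrightarrow> (a-1,b) \<notin> P))}"

definition consistent_parity :: "cell set \<Rightarrow> bool" where
  "consistent_parity P \<longleftrightarrow>
     (\<exists>p. \<forall>v\<in>corners P. fst v mod 2 = p) \<and> (\<exists>q. \<forall>v\<in>corners P. snd v mod 2 = q)"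

definition without_holes :: "cell set \<Rightarrow> bool" where
  "without_holes P \<longleftrightarrow> connected (- region P)"

definition dinf :: "real \<times> real \<Rightarrow> real \<times> real \<Rightarrow> real" where
  "dinf p q = max \<bar>fst p - fst q\<bar> \<bar>snd p - snd q\<bar>"

definition setdist_inf :: "real \<times> real \<Rightarrow> (real \<times> real) set \<Rightarrow> real" where
  "setdist_inf x A = Inf (dinf x ` A)"

definition Binf :: "(real \<times> real) set \<Rightarrow> real \<Rightarrow> (real \<times> real) set" where
  "Binf A r = (if 0 \<le> r then {x. setdist_inf x A \<le> r}
               else - {x. setdist_inf x (- A) \<le> - r})"

end

theory Submission
  imports Defs
begin

lemma ab: "\<bar>dx\<bar> + \<bar>dy\<bar> = (1::int) \<longleftrightarrow> (dx=1 \<and> dy=0) \<or> (dx = -1 \<and> dy=0) \<or> (dx=0 \<and> dy=1) \<or> (dx=0 \<and> dy = -1)"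
  by arith
lemma adj4: "cell_adj a b \<longleftrightarrow> b = (fst a + 1, snd a) \<or> b = (fst a - 1, snd a) \<or> b = (fst a, snd a + 1) \<or> b = (fst a, snd a - 1)"
proof -
  obtain x y u v where "a = (x,y)" "b = (u,v)" by fastforce
  thus ?thesis unfolding cell_adj_def using ab[of "x-u" "y-v"] by auto
qed

lemma adj_par: "cell_adj a b \<Longrightarrow> even (fst a + snd a) \<longleftrightarrow> \<not> even (fst b + snd b)"
  unfolding adj4 by (elim disjE) auto

section \<open>Generic permutation facts\<close>

lemma funpow_in: "f ` L \<subseteq> L \<Longrightarrow> c \<in> L \<Longrightarrow> (f^^n) c \<in> L"
  by (induction n) auto

lemma funpow_inj: "inj_on f L \<Longrightarrow> f ` L \<subseteq> L \<Longrightarrow> a \<in> L \<Longrightarrow> b \<in> L \<Longrightarrow> (f^^n) a = (f^^n) b \<Longrightarrow> a = b"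
proof (induction n arbitrary: a b)
  case 0 then show ?case by simp
next
  case (Suc n)
  have "(f^^n) (f a) = (f^^n) (f b)" using Suc.prems(5) by (simp add: funpow_Suc_right del: funpow.simps)
  hence "f a = f b" using Suc.IH[of "f a" "f b"] Suc.prems(1,2,3,4) by blast
  thus ?case using inj_onD[OF Suc.prems(1) _ Suc.prems(3,4)] by blast
qed

lemma funpow_mult: "(f^^k) c = c \<Longrightarrow> (f^^(k*t)) c = c"
proof (induction t)
  case 0 then show ?case by simp
next
  case (Suc t)
  have "(f^^(k * Suc t)) c = (f^^k) ((f^^(k*t)) c)" by (simp add: funpow_add)
  thus ?case using Suc by simp
qed

lemma funpow_mod: "(f^^k) c = c \<Longrightarrow> (f^^n) c = (f^^(n mod k)) c"
proof -
  assume a: "(f^^k) c = c"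
  have "n = n mod k + k * (n div k)" by simp
  hence "(f^^n) c = (f^^(n mod k)) ((f^^(k*(n div k))) c)" by (metis funpow_add comp_apply)
  thus ?thesis using funpow_mult[OF a] by simp
qed

lemma not_inj_orb: assumes "finite L" "f ` L \<subseteq> L" "c \<in> L"
  shows "\<not> inj_on (\<lambda>i. (f^^i) c) {..card L}"
  proof
    assume "inj_on (\<lambda>i. (f^^i) c) {..card L}"
    moreover have "(\<lambda>i. (f^^i) c) ` {..card L} \<subseteq> L" using funpow_in[OF assms(2,3)] by blast
    ultimately have "card {..card L} \<le> card L" using card_inj_on_le assms(1) by blast
    thus False by simp
  qed

lemma funpow_split: "i < j \<Longrightarrow> (f^^j) c = (f^^i) ((f^^(j-i)) c)"
  by (metis funpow_add comp_apply le_add_diff_inverse less_imp_le)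

lemma periodic_aux:
  assumes "f ` L \<subseteq> L" "inj_on f L" "c \<in> L" "i < j" "(f^^i) c = (f^^j) c"
  shows "(f^^(j-i)) c = c"
proof -
  have "(f^^i) ((f^^(j-i)) c) = (f^^j) c" by (rule funpow_split[OF assms(4), symmetric])
  also have "\<dots> = (f^^i) c" by (rule assms(5)[symmetric])
  finally have "(f^^i) ((f^^(j-i)) c) = (f^^i) c" .
  thus ?thesis using funpow_inj[OF assms(2,1) funpow_in[OF assms(1,3)] assms(3)] by blast
qed

lemma periodic:
  assumes "finite L" "f ` L \<subseteq> L" "inj_on f L" "c \<in> L"
  shows "\<exists>n>0. (f^^n) c = c"
proof -
  obtain i j where ij: "i \<noteq> j" "(f^^i) c = (f^^j) c"
    using not_inj_orb[OF assms(1,2,4)] unfolding inj_on_def by auto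
  show ?thesis
  proof (cases "i < j")
    case True
    have "(f^^(j-i)) c = c" by (rule periodic_aux[OF assms(2,3,4) True ij(2)])
    moreover have "0 < j - i" using True by simp
    ultimately show ?thesis by blast
  next
    case False then have "j < i" using ij(1) by simp
    have "(f^^(i-j)) c = c" by (rule periodic_aux[OF assms(2,3,4) \<open>j<i\<close> ij(2)[symmetric]])
    moreover have "0 < i - j" using \<open>j<i\<close> by simp
    ultimately show ?thesis by blast
  qed
qed

lemma funpow_add_app: "(f^^(a+b)) c = (f^^a) ((f^^b) c)"
  by (simp add: funpow_add)

lemma back_orb:
  assumes "finite L" "f ` L \<subseteq> L" "inj_on f L" "c \<in> L"
  shows "\<exists>m. (f^^m) ((f^^k) c) = c"
proof -
  obtain n where n: "n > 0" "(f^^n) c = c" using periodic[OF assms] by blast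
  have a: "(f^^(n*k)) c = c" by (rule funpow_mult[OF n(2)])
  have nk: "(n*k - k) + k = n*k" using n by (simp add: le_add_diff_inverse2)
  have "(f^^(n*k - k)) ((f^^k) c) = (f^^((n*k - k) + k)) c" by (rule funpow_add_app[symmetric])
  also have "\<dots> = c" unfolding nk by (rule a)
  finally show ?thesis by blast
qed

lemma ham_perm:
  assumes fin: "finite L" and sub: "f ` L \<subseteq> L" and inj: "inj_on f L" and c0: "c0 \<in> L"
    and orb: "\<forall>c\<in>L. \<exists>n. (f^^n) c0 = c" and adj: "\<forall>c\<in>L. cell_adj c (f c)"
    and three: "3 \<le> card L"
  shows "\<exists>vs. ham_cycle L vs \<and> even (length vs)"
proof -
  define k where "k = (LEAST k. 0 < k \<and> (f^^k) c0 = c0)"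
  have ex: "\<exists>k. 0 < k \<and> (f^^k) c0 = c0" using periodic[OF fin sub inj c0] by blast
  have k: "0 < k" "(f^^k) c0 = c0" using LeastI_ex[OF ex] unfolding k_def by auto
  have kmin: "\<And>j. 0 < j \<Longrightarrow> j < k \<Longrightarrow> (f^^j) c0 \<noteq> c0"
    using not_less_Least unfolding k_def by blast
  have injk: "inj_on (\<lambda>i. (f^^i) c0) {..<k}"
  proof (rule inj_onI, rule ccontr)
    fix i j assume ij: "i \<in> {..<k}" "j \<in> {..<k}" "(f^^i) c0 = (f^^j) c0" "i \<noteq> j"
    { fix i j assume ij: "i < j" "j < k" "(f^^i) c0 = (f^^j) c0"
      have "(f^^(j-i)) c0 = c0" using periodic_aux[OF sub inj c0 ij(1,3)] .
      hence False using kmin[of "j-i"] ij by auto }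
    note H = this
    have ik: "i < k" "j < k" using ij(1,2) by auto
    show False
    proof (cases "i < j")
      case True thus False using H[of i j] ik ij(3) by blast
    next
      case False hence "j < i" using ij(4) by simp
      thus False using H[of j i] ik ij(3)[symmetric] by blast
    qed
  qed
  have img_sub: "(\<lambda>i. (f^^i) c0) ` {..<k} \<subseteq> L" using funpow_in[OF sub] c0 by blast
  have L_sub: "L \<subseteq> (\<lambda>i. (f^^i) c0) ` {..<k}"
  proof
    fix c assume "c \<in> L"
    then obtain n where "(f^^n) c0 = c" using orb by blast
    hence "c = (f^^(n mod k)) c0" using funpow_mod[OF k(2), of n] by argo
    moreover have "n mod k < k" using k by simp
    ultimately show "c \<in> (\<lambda>i. (f^^i) c0) ` {..<k}" by blast
  qed
  have imgL: "(\<lambda>i. (f^^i) c0) ` {..<k} = L" using img_sub L_sub by blast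
  have cardk: "card L = k" using card_image[OF injk] imgL by simp
  define vs where "vs = map (\<lambda>i. (f^^i) c0) [0..<k]"
  have len: "length vs = k" unfolding vs_def by simp
  have "distinct vs" unfolding vs_def using injk by (simp add: distinct_map atLeast0LessThan)
  moreover have "set vs = L" unfolding vs_def using imgL by (simp add: atLeast0LessThan)
  moreover have "\<forall>i < length vs. cell_adj (vs ! i) (vs ! (Suc i mod length vs))"
  proof (intro allI impI)
    fix i assume i: "i < length vs"
    have vi: "vs ! i = (f^^i) c0" using i len unfolding vs_def by simp
    have "vs ! (Suc i mod length vs) = f ((f^^i) c0)"
    proof (cases "Suc i < k")
      case True thus ?thesis using len unfolding vs_def by simp
    next
      case False
      hence si: "Suc i = k" using i len by simp
      have "vs ! (Suc i mod length vs) = vs ! 0" using si len by simp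
      also have "\<dots> = c0" unfolding vs_def using k(1) by simp
      also have "\<dots> = (f^^(Suc i)) c0" using si k(2) by simp
      also have "\<dots> = f ((f^^i) c0)" by simp
      finally show ?thesis .
    qed
    moreover have "cell_adj ((f^^i) c0) (f ((f^^i) c0))" using adj funpow_in[OF sub c0] by blast
    ultimately show "cell_adj (vs ! i) (vs ! (Suc i mod length vs))" using vi by simp
  qed
  ultimately have ham: "ham_cycle L vs" using three cardk len unfolding ham_cycle_def by simp
  have par: "\<And>i. even (fst ((f^^i) c0) + snd ((f^^i) c0)) \<longleftrightarrow> (even (fst c0 + snd c0) \<longleftrightarrow> even i)"
  proof -
    fix i show "even (fst ((f^^i) c0) + snd ((f^^i) c0)) \<longleftrightarrow> (even (fst c0 + snd c0) \<longleftrightarrow> even i)"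
    proof (induction i)
      case 0 then show ?case by simp
    next
      case (Suc i)
      have "cell_adj ((f^^i) c0) (f ((f^^i) c0))" using adj funpow_in[OF sub c0] by blast
      from adj_par[OF this] Suc.IH show ?case by (simp only: funpow.simps comp_apply even_Suc) argo
    qed
  qed
  have "even k" using par[of k] k(2) by (simp only:) argo
  thus ?thesis using ham len by blast
qed

definition inS :: "(int\<times>int) set \<Rightarrow> cell \<Rightarrow> bool" where
  "inS S c \<longleftrightarrow> (fst c div 2, snd c div 2) \<in> S"

definition LS :: "(int\<times>int) set \<Rightarrow> cell set" where
  "LS S = {c. inS S c \<and> (\<exists>e. \<bar>fst e - fst c\<bar> \<le> 1 \<and> \<bar>snd e - snd c\<bar> \<le> 1 \<and> \<not> inS S e)}"

definition full :: "(int\<times>int) set \<Rightarrow> int \<times> int \<Rightarrow> bool" where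
  "full S v \<longleftrightarrow> (fst v - 1, snd v - 1) \<in> S \<and> (fst v, snd v - 1) \<in> S \<and> (fst v - 1, snd v) \<in> S \<and> (fst v, snd v) \<in> S"

definition rot :: "cell \<Rightarrow> cell" where
  "rot c = (if even (fst c) then (if even (snd c) then (fst c - 1, snd c) else (fst c, snd c + 1))
            else (if even (snd c) then (fst c, snd c - 1) else (fst c + 1, snd c)))"

definition alt :: "cell \<Rightarrow> cell" where
  "alt c = (if even (fst c) then (if even (snd c) then (fst c, snd c + 1) else (fst c + 1, snd c))
            else (if even (snd c) then (fst c - 1, snd c) else (fst c, snd c - 1)))"

definition rotinv :: "cell \<Rightarrow> cell" where
  "rotinv c = (if even (fst c) then (if even (snd c) then (fst c, snd c - 1) else (fst c - 1, snd c))
            else (if even (snd c) then (fst c + 1, snd c) else (fst c, snd c + 1)))"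

definition altinv :: "cell \<Rightarrow> cell" where
  "altinv c = (if even (fst c) then (if even (snd c) then (fst c + 1, snd c) else (fst c, snd c - 1))
            else (if even (snd c) then (fst c, snd c + 1) else (fst c - 1, snd c)))"

definition sig :: "(int\<times>int) set \<Rightarrow> cell \<Rightarrow> cell" where
  "sig S c = (if inS S (rot c) then rot c else alt c)"

definition tau :: "(int\<times>int) set \<Rightarrow> cell \<Rightarrow> cell" where
  "tau S c = (if inS S (rotinv c) then rotinv c else altinv c)"

lemma cell_cases:
  fixes c :: cell
  obtains m n where "c = (2*m, 2*n)" | m n where "c = (2*m+1, 2*n)"
    | m n where "c = (2*m, 2*n+1)" | m n where "c = (2*m+1, 2*n+1)"
proof -
  obtain x y where c: "c = (x,y)" by (cases c)
  have x: "x = 2*(x div 2) \<or> x = 2*(x div 2) + 1" by presburger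
  have y: "y = 2*(y div 2) \<or> y = 2*(y div 2) + 1" by presburger
  from x y c that show ?thesis by metis
qed

lemma dm1[simp]: "(2*m - 1::int) div 2 = m - 1" by simp
lemma dm2[simp]: "(2*m + 2::int) div 2 = m + 1" by simp
lemma dm3[simp]: "(2*m + 3::int) div 2 = m + 1" by simp
lemma dm4[simp]: "(2*m - 2::int) div 2 = m - 1" by simp

lemmas cs = rot_def alt_def rotinv_def altinv_def sig_def tau_def inS_def full_def

lemma d1: "\<bar>e - x\<bar> \<le> (1::int) \<Longrightarrow> e div 2 = (x+1) div 2 - 1 \<or> e div 2 = (x+1) div 2"
  by presburger
lemma d2: "(x::int) = 2*((x+1) div 2) - 1 \<or> x = 2*((x+1) div 2)"
  by presburger

lemma LS_iff: "c \<in> LS S \<longleftrightarrow> inS S c \<and> \<not> full S ((fst c + 1) div 2, (snd c + 1) div 2)"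
proof
  assume "c \<in> LS S"
  then obtain e where c: "inS S c" and e: "\<bar>fst e - fst c\<bar> \<le> 1" "\<bar>snd e - snd c\<bar> \<le> 1" "\<not> inS S e"
    unfolding LS_def by auto
  from d1[OF e(1)] d1[OF e(2)] e(3) c show "inS S c \<and> \<not> full S ((fst c + 1) div 2, (snd c + 1) div 2)"
    unfolding inS_def full_def by auto
next
  assume a: "inS S c \<and> \<not> full S ((fst c + 1) div 2, (snd c + 1) div 2)"
  define ax where "ax = (fst c + 1) div 2"
  define ay where "ay = (snd c + 1) div 2"
  have hx: "fst c = 2*ax - 1 \<or> fst c = 2*ax" using d2 ax_def by blast
  have hy: "snd c = 2*ay - 1 \<or> snd c = 2*ay" using d2 ay_def by blast
  have m1: "(2*ax - 1) div 2 = ax - 1" "(2*ay - 1) div 2 = ay - 1" by auto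
  have nf: "(ax-1,ay-1) \<notin> S \<or> (ax,ay-1) \<notin> S \<or> (ax-1,ay) \<notin> S \<or> (ax,ay) \<notin> S"
    using a unfolding full_def ax_def ay_def by auto
  have "\<exists>e. \<bar>fst e - fst c\<bar> \<le> 1 \<and> \<bar>snd e - snd c\<bar> \<le> 1 \<and> \<not> inS S e"
  proof -
    { fix i j :: int assume ij: "i \<in> {0,1}" "j \<in> {0,1}" "(ax - i, ay - j) \<notin> S"
      have "\<bar>fst (2*ax - i, 2*ay - j) - fst c\<bar> \<le> 1 \<and> \<bar>snd (2*ax - i, 2*ay - j) - snd c\<bar> \<le> 1
           \<and> \<not> inS S (2*ax - i, 2*ay - j)"
        using ij hx hy unfolding inS_def by auto
      hence ?thesis by blast }
    note * = this
    from nf show ?thesis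
      apply (elim disjE)
      using *[of 1 1] *[of 0 1] *[of 1 0] *[of 0 0] by auto
  qed
  with a show "c \<in> LS S" unfolding LS_def by auto
qed

lemma tau_sig: "inS S c \<Longrightarrow> tau S (sig S c) = c"
  by (cases c rule: cell_cases) (auto simp: cs add.commute)

lemma sig_LS: "c \<in> LS S \<Longrightarrow> sig S c \<in> LS S"
  unfolding LS_iff by (cases c rule: cell_cases) (auto simp: cs add.commute)

lemma four: "c \<in> LS S \<Longrightarrow> inS S (rot c) \<Longrightarrow> inS S (rot (rot c)) \<Longrightarrow> inS S (rot (rot (rot c))) \<Longrightarrow> False"
  unfolding LS_iff by (cases c rule: cell_cases) (auto simp: cs add.commute)

lemma sig_adj: "cell_adj c (sig S c)"
  by (cases c rule: cell_cases) (auto simp: cs cell_adj_def)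

lemma sig2: "sig S (sig S c) \<noteq> c"
  by (cases c rule: cell_cases) (auto simp: cs add.commute)

lemma sig_ee: "sig S (2*m, 2*n) = (if (m-1,n) \<in> S then (2*m-1, 2*n) else (2*m, 2*n+1))"
  by (simp add: cs)
lemma sig_oe: "sig S (2*m+1, 2*n) = (if (m,n-1) \<in> S then (2*m+1, 2*n-1) else (2*m, 2*n))"
  by (simp add: cs)
lemma sig_oo: "sig S (2*m+1, 2*n+1) = (if (m+1,n) \<in> S then (2*m+2, 2*n+1) else (2*m+1, 2*n))"
  by (simp add: cs add.commute)
lemma sig_eo: "sig S (2*m, 2*n+1) = (if (m,n+1) \<in> S then (2*m, 2*n+2) else (2*m+1, 2*n+1))"
  by (simp add: cs add.commute)
lemma sig_ee2: "sig S (2*m+2, 2*n) = (if (m,n) \<in> S then (2*m+1, 2*n) else (2*m+2, 2*n+1))"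
  by (simp add: cs)
lemma sig_eo2: "sig S (2*m+2, 2*n+1) = (if (m+1,n+1) \<in> S then (2*m+2, 2*n+2) else (2*m+3, 2*n+1))"
  by (simp add: cs add.commute)
lemma sig_ee3: "sig S (2*m, 2*n+2) = (if (m-1,n+1) \<in> S then (2*m-1, 2*n+2) else (2*m, 2*n+3))"
  by (simp add: cs add.commute)
lemma sig_oe3: "sig S (2*m+1, 2*n+2) = (if (m,n) \<in> S then (2*m+1, 2*n+1) else (2*m, 2*n+2))"
  by (simp add: cs add.commute)

section \<open>Crossing numbers\<close>

definition VC :: "(cell \<Rightarrow> cell) \<Rightarrow> cell set \<Rightarrow> int \<Rightarrow> int \<Rightarrow> cell set" where
  "VC f Ob a b = {c\<in>Ob. fst c \<ge> a \<and> fst (f c) = fst c \<and> ((snd c = b-1 \<and> snd (f c) = b) \<or> (snd c = b \<and> snd (f c) = b-1))}"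
definition VX :: "(cell \<Rightarrow> cell) \<Rightarrow> cell set \<Rightarrow> int \<Rightarrow> int \<Rightarrow> cell set" where
  "VX f Ob a b = {c\<in>Ob. fst c = a \<and> fst (f c) = a \<and> ((snd c = b-1 \<and> snd (f c) = b) \<or> (snd c = b \<and> snd (f c) = b-1))}"
definition HC :: "(cell \<Rightarrow> cell) \<Rightarrow> cell set \<Rightarrow> int \<Rightarrow> int \<Rightarrow> cell set" where
  "HC f Ob a b = {c\<in>Ob. snd c = b \<and> snd (f c) = b \<and> ((fst c = a-1 \<and> fst (f c) = a) \<or> (fst c = a \<and> fst (f c) = a-1))}"

lemma horiz:
  assumes "finite Ob" "a' = a + 1"
  shows "card (VC f Ob a b) = card (VC f Ob a' b) + card (VX f Ob a b)"
proof -
  have "VC f Ob a b = VC f Ob a' b \<union> VX f Ob a b" using assms(2) unfolding VC_def VX_def by auto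
  moreover have "VC f Ob a' b \<inter> VX f Ob a b = {}" using assms(2) unfolding VC_def VX_def by auto
  moreover have "finite (VC f Ob a' b)" "finite (VX f Ob a b)" using assms(1) unfolding VC_def VX_def by auto
  ultimately show ?thesis by (simp add: card_Un_disjoint)
qed

lemma ee:
  assumes fin: "finite Ob" and sub: "f ` Ob \<subseteq> Ob" and inj: "inj_on f Ob"
  shows "card {c\<in>Ob. c\<notin>R \<and> f c\<in>R} = card {c\<in>Ob. c\<in>R \<and> f c\<notin>R}"
proof -
  have fO: "f ` Ob = Ob" using endo_inj_surj[OF fin sub inj] .
  have im: "f ` {c\<in>Ob. f c \<in> R} = Ob \<inter> R"
  proof
    show "f ` {c\<in>Ob. f c \<in> R} \<subseteq> Ob \<inter> R" using sub by auto
  next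
    show "Ob \<inter> R \<subseteq> f ` {c\<in>Ob. f c \<in> R}"
    proof
      fix y assume y: "y \<in> Ob \<inter> R"
      then obtain c where "c \<in> Ob" "y = f c" using fO by (metis IntD1 imageE)
      thus "y \<in> f ` {c\<in>Ob. f c \<in> R}" using y by blast
    qed
  qed
  have ij: "inj_on f {c\<in>Ob. f c \<in> R}" using inj by (rule inj_on_subset) auto
  have e1: "card {c\<in>Ob. f c\<in>R} = card (Ob \<inter> R)" using card_image[OF ij] im by simp
  have u1: "{c\<in>Ob. f c\<in>R} = {c\<in>Ob. c\<in>R \<and> f c\<in>R} \<union> {c\<in>Ob. c\<notin>R \<and> f c\<in>R}" by auto
  have u2: "Ob \<inter> R = {c\<in>Ob. c\<in>R \<and> f c\<in>R} \<union> {c\<in>Ob. c\<in>R \<and> f c\<notin>R}" by auto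
  have c1: "card {c\<in>Ob. f c\<in>R} = card {c\<in>Ob. c\<in>R \<and> f c\<in>R} + card {c\<in>Ob. c\<notin>R \<and> f c\<in>R}"
    unfolding u1 by (rule card_Un_disjoint) (use fin in auto)
  have c2: "card (Ob \<inter> R) = card {c\<in>Ob. c\<in>R \<and> f c\<in>R} + card {c\<in>Ob. c\<in>R \<and> f c\<notin>R}"
    unfolding u2 by (rule card_Un_disjoint) (use fin in auto)
  show ?thesis using e1 c1 c2 by linarith
qed

lemma flip_even:
  assumes "finite Ob" "f ` Ob \<subseteq> Ob" "inj_on f Ob"
  shows "even (card {c\<in>Ob. (c\<in>R) \<noteq> (f c\<in>R)})"
proof -
  have u: "{c\<in>Ob. (c\<in>R) \<noteq> (f c\<in>R)} = {c\<in>Ob. c\<notin>R \<and> f c\<in>R} \<union> {c\<in>Ob. c\<in>R \<and> f c\<notin>R}" by auto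
  have "card {c\<in>Ob. (c\<in>R) \<noteq> (f c\<in>R)} = card {c\<in>Ob. c\<notin>R \<and> f c\<in>R} + card {c\<in>Ob. c\<in>R \<and> f c\<notin>R}"
    unfolding u by (rule card_Un_disjoint) (use assms(1) in auto)
  thus ?thesis using ee[OF assms, of R] by simp
qed

lemma vert:
  assumes fin: "finite Ob" and sub: "f ` Ob \<subseteq> Ob" and inj: "inj_on f Ob"
    and adj: "\<forall>c\<in>Ob. cell_adj c (f c)" and b': "b' = b + 1"
  shows "even (card (VC f Ob a b) + card (VC f Ob a b') + card (HC f Ob a b))"
proof -
  define R where "R = {c::cell. snd c = b \<and> fst c \<ge> a}"
  have eq: "{c\<in>Ob. (c\<in>R) \<noteq> (f c\<in>R)} = VC f Ob a b \<union> VC f Ob a b' \<union> HC f Ob a b"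
  proof (rule set_eqI)
    fix c
    show "c \<in> {c\<in>Ob. (c\<in>R) \<noteq> (f c\<in>R)} \<longleftrightarrow> c \<in> VC f Ob a b \<union> VC f Ob a b' \<union> HC f Ob a b"
    proof (cases "c \<in> Ob")
      case False thus ?thesis unfolding VC_def HC_def by auto
    next
      case True
      obtain x y where c: "c = (x,y)" by fastforce
      have "f c = (x+1,y) \<or> f c = (x-1,y) \<or> f c = (x,y+1) \<or> f c = (x,y-1)"
        using adj True unfolding adj4 c by auto
      thus ?thesis using True unfolding VC_def HC_def R_def c b' by (elim disjE) auto
    qed
  qed
  have fins: "finite (VC f Ob a b)" "finite (VC f Ob a b')" "finite (HC f Ob a b)"
    using fin unfolding VC_def HC_def by auto
  have d1: "VC f Ob a b \<inter> VC f Ob a b' = {}" unfolding VC_def b' by auto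
  have d2: "(VC f Ob a b \<union> VC f Ob a b') \<inter> HC f Ob a b = {}" unfolding VC_def HC_def by auto
  have "card (VC f Ob a b \<union> VC f Ob a b' \<union> HC f Ob a b) = card (VC f Ob a b) + card (VC f Ob a b') + card (HC f Ob a b)"
    using fins d1 d2 by (simp add: card_Un_disjoint)
  thus ?thesis using flip_even[OF fin sub inj, of R] eq by simp
qed

lemma in_LS_S: "c \<in> LS S \<Longrightarrow> (fst c div 2, snd c div 2) \<in> S"
  unfolding LS_def inS_def by auto

lemma VX1: "VX (sig S) Ob (2*A+1) (2*B+1) = (if (2*A+1,2*B+1) \<in> Ob \<and> (A+1,B) \<notin> S then {(2*A+1,2*B+1)} else {})"
proof (rule set_eqI)
  fix x :: cell
  obtain u v where x: "x = (u,v)" by fastforce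
  show "x \<in> VX (sig S) Ob (2*A+1) (2*B+1) \<longleftrightarrow> x \<in> (if (2*A+1,2*B+1) \<in> Ob \<and> (A+1,B) \<notin> S then {(2*A+1,2*B+1)} else {})"
  proof (cases "u = 2*A+1 \<and> (v = 2*B \<or> v = 2*B+1)")
    case True thus ?thesis unfolding x VX_def by (auto simp: sig_oe sig_oo split: if_splits)
  next
    case False thus ?thesis unfolding x VX_def by auto
  qed
qed

lemma VX2: "VX (sig S) Ob (2*A+2) (2*B+1) = (if (2*A+2,2*B) \<in> Ob \<and> (A,B) \<notin> S then {(2*A+2,2*B)} else {})"
proof (rule set_eqI)
  fix x :: cell
  obtain u v where x: "x = (u,v)" by fastforce
  show "x \<in> VX (sig S) Ob (2*A+2) (2*B+1) \<longleftrightarrow> x \<in> (if (2*A+2,2*B) \<in> Ob \<and> (A,B) \<notin> S then {(2*A+2,2*B)} else {})"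
  proof (cases "u = 2*A+2 \<and> (v = 2*B \<or> v = 2*B+1)")
    case True thus ?thesis unfolding x VX_def by (auto simp: sig_ee2 sig_eo2 split: if_splits)
  next
    case False thus ?thesis unfolding x VX_def by auto
  qed
qed

lemma HC1: "HC (sig S) Ob (2*A+1) (2*B+1) = (if (2*A,2*B+1) \<in> Ob \<and> (A,B+1) \<notin> S then {(2*A,2*B+1)} else {})"
proof (rule set_eqI)
  fix x :: cell
  obtain u v where x: "x = (u,v)" by fastforce
  show "x \<in> HC (sig S) Ob (2*A+1) (2*B+1) \<longleftrightarrow> x \<in> (if (2*A,2*B+1) \<in> Ob \<and> (A,B+1) \<notin> S then {(2*A,2*B+1)} else {})"
  proof (cases "v = 2*B+1 \<and> (u = 2*A \<or> u = 2*A+1)")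
    case True thus ?thesis unfolding x HC_def by (auto simp: sig_eo sig_oo split: if_splits)
  next
    case False thus ?thesis unfolding x HC_def by auto
  qed
qed

lemma HC2: "HC (sig S) Ob (2*A+1) (2*B+2) = (if (2*A+1,2*B+2) \<in> Ob \<and> (A,B) \<notin> S then {(2*A+1,2*B+2)} else {})"
proof (rule set_eqI)
  fix x :: cell
  obtain u v where x: "x = (u,v)" by fastforce
  show "x \<in> HC (sig S) Ob (2*A+1) (2*B+2) \<longleftrightarrow> x \<in> (if (2*A+1,2*B+2) \<in> Ob \<and> (A,B) \<notin> S then {(2*A+1,2*B+2)} else {})"
  proof (cases "v = 2*B+2 \<and> (u = 2*A \<or> u = 2*A+1)")
    case True thus ?thesis unfolding x HC_def by (auto simp: sig_ee3 sig_oe3 split: if_splits)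
  next
    case False thus ?thesis unfolding x HC_def by auto
  qed
qed

definition F :: "(int\<times>int) set \<Rightarrow> cell set \<Rightarrow> int \<Rightarrow> int \<Rightarrow> nat" where
  "F S Ob a b = card (VC (sig S) Ob a b)"

definition par :: "(int\<times>int) set \<Rightarrow> cell set \<Rightarrow> int\<times>int \<Rightarrow> bool" where
  "par S Ob X = even (F S Ob (2 * fst X + 1) (2 * snd X + 1))"

lemma edgeH:
  assumes fin: "finite Ob" and OL: "Ob \<subseteq> LS S"
    and X: "X = (A,B)" and Y: "Y = (A+1,B)" and c1: "c1 = (2*A+1,2*B+1)" and c2: "c2 = (2*A+2,2*B)"
  shows "par S Ob X \<noteq> par S Ob Y \<longleftrightarrow> (c1 \<in> Ob \<and> Y \<notin> S) \<or> (c2 \<in> Ob \<and> X \<notin> S)"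
proof -
  have h1: "F S Ob (2*A+1) (2*B+1) = F S Ob (2*A+2) (2*B+1) + card (VX (sig S) Ob (2*A+1) (2*B+1))"
    unfolding F_def by (rule horiz[OF fin]) simp
  have h2: "F S Ob (2*A+2) (2*B+1) = F S Ob (2*(A+1)+1) (2*B+1) + card (VX (sig S) Ob (2*A+2) (2*B+1))"
    unfolding F_def by (rule horiz[OF fin]) simp
  have n1: "c1 \<in> Ob \<Longrightarrow> X \<in> S" using OL in_LS_S[of c1 S] X c1 by auto
  have n2: "c2 \<in> Ob \<Longrightarrow> Y \<in> S" using OL in_LS_S[of c2 S] Y c2 by auto
  have k1: "card (VX (sig S) Ob (2*A+1) (2*B+1)) = (if c1 \<in> Ob \<and> Y \<notin> S then 1 else 0)"
    unfolding VX1 c1 Y by simp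
  have k2: "card (VX (sig S) Ob (2*A+2) (2*B+1)) = (if c2 \<in> Ob \<and> X \<notin> S then 1 else 0)"
    unfolding VX2 c2 X by simp
  show ?thesis unfolding par_def X Y using h1 h2 k1 k2 n1 n2 X Y by (auto split: if_splits)
qed

lemma edgeV:
  assumes fin: "finite Ob" and OL: "Ob \<subseteq> LS S" and inj: "inj_on (sig S) Ob" and sub: "sig S ` Ob \<subseteq> Ob"
    and X: "X = (A,B)" and Y: "Y = (A,B+1)" and c1: "c1 = (2*A,2*B+1)" and c2: "c2 = (2*A+1,2*B+2)"
  shows "par S Ob X \<noteq> par S Ob Y \<longleftrightarrow> (c1 \<in> Ob \<and> Y \<notin> S) \<or> (c2 \<in> Ob \<and> X \<notin> S)"
proof -
  have adj: "\<forall>c\<in>Ob. cell_adj c (sig S c)" using sig_adj by blast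
  have v1: "even (F S Ob (2*A+1) (2*B+1) + F S Ob (2*A+1) (2*B+2) + card (HC (sig S) Ob (2*A+1) (2*B+1)))"
    unfolding F_def by (rule vert[OF fin sub inj adj]) simp
  have v2: "even (F S Ob (2*A+1) (2*B+2) + F S Ob (2*A+1) (2*(B+1)+1) + card (HC (sig S) Ob (2*A+1) (2*B+2)))"
    unfolding F_def by (rule vert[OF fin sub inj adj]) simp
  have n1: "c1 \<in> Ob \<Longrightarrow> X \<in> S" using OL in_LS_S[of c1 S] X c1 by auto
  have n2: "c2 \<in> Ob \<Longrightarrow> Y \<in> S" using OL in_LS_S[of c2 S] Y c2 by auto
  have k1: "card (HC (sig S) Ob (2*A+1) (2*B+1)) = (if c1 \<in> Ob \<and> Y \<notin> S then 1 else 0)"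
    unfolding HC1 c1 Y by simp
  have k2: "card (HC (sig S) Ob (2*A+1) (2*B+2)) = (if c2 \<in> Ob \<and> X \<notin> S then 1 else 0)"
    unfolding HC2 c2 X by simp
  show ?thesis unfolding par_def X Y using v1 v2 k1 k2 n1 n2 X Y by (auto split: if_splits)
qed

locale orbset =
  fixes S :: "(int\<times>int) set" and Ob :: "cell set"
  assumes fin: "finite Ob" and OL: "Ob \<subseteq> LS S" and inj: "inj_on (sig S) Ob" and sub: "sig S ` Ob \<subseteq> Ob"
begin

lemma hsame: "par S Ob (A,B) \<noteq> par S Ob (A+1,B) \<Longrightarrow> ((A,B)\<in>S \<longleftrightarrow> (A+1,B) \<notin> S)"
proof -
  assume a: "par S Ob (A,B) \<noteq> par S Ob (A+1,B)"
  have n1: "(2*A+1,2*B+1) \<in> Ob \<Longrightarrow> (A,B) \<in> S" using OL in_LS_S[of "(2*A+1,2*B+1)" S] by auto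
  have n2: "(2*A+2,2*B) \<in> Ob \<Longrightarrow> (A+1,B) \<in> S" using OL in_LS_S[of "(2*A+2,2*B)" S] by auto
  show ?thesis using edgeH[OF fin OL refl refl refl refl] a n1 n2 by blast
qed

lemma vsame: "par S Ob (A,B) \<noteq> par S Ob (A,B+1) \<Longrightarrow> ((A,B)\<in>S \<longleftrightarrow> (A,B+1) \<notin> S)"
proof -
  assume a: "par S Ob (A,B) \<noteq> par S Ob (A,B+1)"
  have n1: "(2*A,2*B+1) \<in> Ob \<Longrightarrow> (A,B) \<in> S" using OL in_LS_S[of "(2*A,2*B+1)" S] by auto
  have n2: "(2*A+1,2*B+2) \<in> Ob \<Longrightarrow> (A,B+1) \<in> S" using OL in_LS_S[of "(2*A+1,2*B+2)" S] by auto
  show ?thesis using edgeV[OF fin OL inj sub refl refl refl refl] a n1 n2 by blast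
qed

lemma samepar:
  assumes "cell_adj X Y" "X \<in> S \<longleftrightarrow> Y \<in> S"
  shows "par S Ob X = par S Ob Y"
proof -
  obtain A B where X: "X = (A,B)" by fastforce
  have "Y = (A+1,B) \<or> Y = (A-1,B) \<or> Y = (A,B+1) \<or> Y = (A,B-1)" using assms(1) unfolding adj4 X by auto
  thus ?thesis
  proof (elim disjE)
    assume Y: "Y = (A+1,B)" show ?thesis using hsame[of A B] assms(2) unfolding X Y by blast
  next
    assume Y: "Y = (A-1,B)" show ?thesis using hsame[of "A-1" B] assms(2) unfolding X Y by auto
  next
    assume Y: "Y = (A,B+1)" show ?thesis using vsame[of A B] assms(2) unfolding X Y by blast
  next
    assume Y: "Y = (A,B-1)" show ?thesis using vsame[of A "B-1"] assms(2) unfolding X Y by auto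
  qed
qed

lemma const_on:
  assumes g: "graph_connected T" and TS: "T = S \<or> T = - S" and X: "X \<in> T" and Y: "Y \<in> T"
  shows "par S Ob X = par S Ob Y"
proof -
  have "(\<lambda>u v. u \<in> T \<and> v \<in> T \<and> cell_adj u v)\<^sup>*\<^sup>* X Y" using g X Y unfolding graph_connected_def by blast
  thus ?thesis
  proof (induction rule: rtranclp_induct)
    case base then show ?case by simp
  next
    case (step y z)
    have "y \<in> S \<longleftrightarrow> z \<in> S" using step(2) TS by auto
    hence "par S Ob y = par S Ob z" using samepar step(2) by blast
    with step(3) show ?case by simp
  qed
qed

lemma desig:
  assumes c: "c \<in> LS S" and r: "\<not> inS S (rot c)"
  shows "c \<in> Ob \<longleftrightarrow> par S Ob (fst c div 2, snd c div 2) \<noteq> par S Ob (fst (rot c) div 2, snd (rot c) div 2)"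
proof -
  have cS: "(fst c div 2, snd c div 2) \<in> S" using in_LS_S[OF c] .
  show ?thesis
  proof (cases c rule: cell_cases)
    case (1 m n)
    have e: "par S Ob (m-1,n) \<noteq> par S Ob (m-1+1,n) \<longleftrightarrow> ((2*(m-1)+1,2*n+1) \<in> Ob \<and> (m-1+1,n) \<notin> S) \<or> ((2*(m-1)+2,2*n) \<in> Ob \<and> (m-1,n) \<notin> S)"
      by (rule edgeH[OF fin OL refl refl refl refl])
    have "(2*(m-1)+2,2*n) = c" using 1 by (simp add: algebra_simps)
    thus ?thesis using e cS r 1 by (auto simp: rot_def inS_def)
  next
    case (2 m n)
    have e: "par S Ob (m,n-1) \<noteq> par S Ob (m,n-1+1) \<longleftrightarrow> ((2*m,2*(n-1)+1) \<in> Ob \<and> (m,n-1+1) \<notin> S) \<or> ((2*m+1,2*(n-1)+2) \<in> Ob \<and> (m,n-1) \<notin> S)"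
      by (rule edgeV[OF fin OL inj sub refl refl refl refl])
    have "(2*m+1,2*(n-1)+2) = c" using 2 by (simp add: algebra_simps)
    thus ?thesis using e cS r 2 by (auto simp: rot_def inS_def)
  next
    case (3 m n)
    have e: "par S Ob (m,n) \<noteq> par S Ob (m,n+1) \<longleftrightarrow> ((2*m,2*n+1) \<in> Ob \<and> (m,n+1) \<notin> S) \<or> ((2*m+1,2*n+2) \<in> Ob \<and> (m,n) \<notin> S)"
      by (rule edgeV[OF fin OL inj sub refl refl refl refl])
    thus ?thesis using e cS r 3 by (auto simp: rot_def inS_def add.commute)
  next
    case (4 m n)
    have e: "par S Ob (m,n) \<noteq> par S Ob (m+1,n) \<longleftrightarrow> ((2*m+1,2*n+1) \<in> Ob \<and> (m+1,n) \<notin> S) \<or> ((2*m+2,2*n) \<in> Ob \<and> (m,n) \<notin> S)"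
      by (rule edgeH[OF fin OL refl refl refl refl])
    thus ?thesis using e cS r 4 by (auto simp: rot_def inS_def add.commute)
  qed
qed

end

lemma reach:
  assumes c: "c \<in> LS S"
  shows "\<exists>k. (sig S^^k) c \<in> LS S \<and> \<not> inS S (rot ((sig S^^k) c))"
proof (cases "inS S (rot c)")
  case False thus ?thesis using c by (intro exI[of _ 0]) simp
next
  case T1: True
  have s1: "sig S c = rot c" using T1 by (simp add: sig_def)
  have l1: "rot c \<in> LS S" using sig_LS[OF c] s1 by simp
  show ?thesis
  proof (cases "inS S (rot (rot c))")
    case False thus ?thesis using l1 s1 by (intro exI[of _ 1]) simp
  next
    case T2: True
    have s2: "sig S (rot c) = rot (rot c)" using T2 by (simp add: sig_def)
    have l2: "rot (rot c) \<in> LS S" using sig_LS[OF l1] s2 by simp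
    show ?thesis
    proof (cases "inS S (rot (rot (rot c)))")
      case False thus ?thesis using l2 s1 s2 by (intro exI[of _ 2]) (simp add: numeral_2_eq_2)
    next
      case True thus ?thesis using four[OF c T1 T2] by simp
    qed
  qed
qed

theorem core_ham:
  assumes finL: "finite (LS S)" and ne: "LS S \<noteq> {}" and gS: "graph_connected S" and gC: "graph_connected (- S)"
  shows "\<exists>vs. ham_cycle (LS S) vs \<and> even (length vs)"
proof -
  define L where "L = LS S"
  define f where "f = sig S"
  have subL: "f ` L \<subseteq> L" unfolding f_def L_def using sig_LS by blast
  have injL: "inj_on f L"
  proof (rule inj_on_inverseI[where g = "tau S"])
    fix x assume "x \<in> L" thus "tau S (f x) = x" unfolding f_def L_def LS_def using tau_sig by blast
  qed
  obtain c0 where c0: "c0 \<in> L" using ne L_def by blast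
  define Ob where "Ob = range (\<lambda>n. (f^^n) c0)"
  have OL: "Ob \<subseteq> L" unfolding Ob_def using funpow_in[OF subL c0] by blast
  have finO: "finite Ob" using finite_subset[OF OL] finL L_def by blast
  have subO: "f ` Ob \<subseteq> Ob"
  proof
    fix y assume "y \<in> f ` Ob"
    then obtain n where "y = f ((f^^n) c0)" unfolding Ob_def by blast
    hence "y = (f^^(Suc n)) c0" by simp
    thus "y \<in> Ob" unfolding Ob_def by blast
  qed
  have injO: "inj_on f Ob" using inj_on_subset[OF injL OL] .
  interpret orbset S Ob
    using finO OL injO subO unfolding f_def L_def by unfold_locales auto
  have constS: "\<And>X Y. X \<in> S \<Longrightarrow> Y \<in> S \<Longrightarrow> par S Ob X = par S Ob Y" using const_on[OF gS] by blast
  have constC: "\<And>X Y. X \<notin> S \<Longrightarrow> Y \<notin> S \<Longrightarrow> par S Ob X = par S Ob Y" using const_on[OF gC] by blast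
  obtain k where k: "(f^^k) c0 \<in> L" "\<not> inS S (rot ((f^^k) c0))" using reach[of c0 S] c0 unfolding f_def L_def by blast
  define d where "d = (f^^k) c0"
  have dO: "d \<in> Ob" unfolding d_def Ob_def by blast
  have dpar: "par S Ob (fst d div 2, snd d div 2) \<noteq> par S Ob (fst (rot d) div 2, snd (rot d) div 2)"
    using desig[of d] k dO unfolding d_def L_def by blast
  have dS: "(fst d div 2, snd d div 2) \<in> S" using in_LS_S k(1) unfolding d_def L_def by blast
  have dC: "(fst (rot d) div 2, snd (rot d) div 2) \<notin> S" using k(2) unfolding d_def inS_def by blast
  have sep: "\<And>X Y. X \<in> S \<Longrightarrow> Y \<notin> S \<Longrightarrow> par S Ob X \<noteq> par S Ob Y"
    using constS[OF _ dS] constC[OF _ dC] dpar by metis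
  have orb: "\<forall>c\<in>L. \<exists>n. (f^^n) c0 = c"
  proof
    fix c assume cL: "c \<in> L"
    obtain j where j: "(f^^j) c \<in> L" "\<not> inS S (rot ((f^^j) c))" using reach[of c S] cL unfolding f_def L_def by blast
    define e where "e = (f^^j) c"
    have eS: "(fst e div 2, snd e div 2) \<in> S" using in_LS_S j(1) unfolding e_def L_def by blast
    have eC: "(fst (rot e) div 2, snd (rot e) div 2) \<notin> S" using j(2) unfolding e_def inS_def by blast
    have "e \<in> Ob" using desig[of e] j sep[OF eS eC] unfolding e_def L_def by blast
    then obtain n where n: "(f^^n) c0 = e" unfolding Ob_def by blast
    obtain m where m: "(f^^m) ((f^^j) c) = c" using back_orb[OF _ subL injL cL] finL L_def by blast
    have "(f^^(m+n)) c0 = c" using m n unfolding e_def by (simp add: funpow_add)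
    thus "\<exists>n. (f^^n) c0 = c" by blast
  qed
  have adj: "\<forall>c\<in>L. cell_adj c (f c)" unfolding f_def using sig_adj by blast
  have noself: "\<And>c. \<not> cell_adj c c" unfolding cell_adj_def by simp
  have three: "3 \<le> card L"
  proof -
    have m1: "f c0 \<in> L" "f (f c0) \<in> L" using subL c0 by auto
    have d1: "f c0 \<noteq> c0" using adj c0 noself by metis
    have d2: "f (f c0) \<noteq> f c0" using adj m1 noself by metis
    have d3: "f (f c0) \<noteq> c0" unfolding f_def by (rule sig2)
    have "card {c0, f c0, f (f c0)} = 3" using d1 d2 d3 by auto
    moreover have "{c0, f c0, f (f c0)} \<subseteq> L" using c0 m1 by auto
    ultimately show ?thesis using card_mono[OF finL[folded L_def]] by metis
  qed
  show ?thesis using ham_perm[OF finL[folded L_def] subL injL c0 orb adj three] unfolding L_def .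
qed

lemma vprop:
  assumes "(a, b+1) \<notin> corners P" "((a-1,b) \<in> P) \<noteq> ((a,b) \<in> P)"
  shows "((a-1,b+1) \<in> P \<longleftrightarrow> (a-1,b) \<in> P) \<and> ((a,b+1) \<in> P \<longleftrightarrow> (a,b) \<in> P)"
  using assms unfolding corners_def
  by (cases "(a-1,b+1) \<in> P"; cases "(a,b+1) \<in> P"; cases "(a-1,b) \<in> P"; cases "(a,b) \<in> P")
     (auto simp: Int_insert_left card_insert_if)

lemma hprop:
  assumes "(a+1, b) \<notin> corners P" "((a,b-1) \<in> P) \<noteq> ((a,b) \<in> P)"
  shows "((a+1,b-1) \<in> P \<longleftrightarrow> (a,b-1) \<in> P) \<and> ((a+1,b) \<in> P \<longleftrightarrow> (a,b) \<in> P)"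
  using assms unfolding corners_def
  by (cases "(a+1,b-1) \<in> P"; cases "(a+1,b) \<in> P"; cases "(a,b-1) \<in> P"; cases "(a,b) \<in> P")
     (auto simp: Int_insert_left card_insert_if)

lemma inf_col: "finite P \<Longrightarrow> \<forall>t::nat. (x, b + int t) \<in> P \<Longrightarrow> False"
proof -
  assume f: "finite P" and a: "\<forall>t::nat. (x, b + int t) \<in> P"
  have "range (\<lambda>t::nat. (x, b + int t)) \<subseteq> P" using a by auto
  hence "finite (range (\<lambda>t::nat. (x, b + int t)))" using f finite_subset by blast
  moreover have "inj (\<lambda>t::nat. (x, b + int t))" by (rule injI) simp
  ultimately show False using finite_imageD by fastforce
qed

lemma inf_row: "finite P \<Longrightarrow> \<forall>t::nat. (a + int t, y) \<in> P \<Longrightarrow> False"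
proof -
  assume f: "finite P" and a: "\<forall>t::nat. (a + int t, y) \<in> P"
  have "range (\<lambda>t::nat. (a + int t, y)) \<subseteq> P" using a by auto
  hence "finite (range (\<lambda>t::nat. (a + int t, y)))" using f finite_subset by blast
  moreover have "inj (\<lambda>t::nat. (a + int t, y))" by (rule injI) simp
  ultimately show False using finite_imageD by fastforce
qed

lemma col_const:
  assumes f: "finite P" and nc: "\<And>t. (a, t) \<notin> corners P"
  shows "((a-1,b) \<in> P) = ((a,b) \<in> P)"
proof (rule ccontr)
  assume d: "((a-1,b) \<in> P) \<noteq> ((a,b) \<in> P)"
  have "\<forall>t::nat. ((a-1,b+int t) \<in> P \<longleftrightarrow> (a-1,b) \<in> P) \<and> ((a,b+int t) \<in> P \<longleftrightarrow> (a,b) \<in> P)"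
  proof
    fix t :: nat show "((a-1,b+int t) \<in> P \<longleftrightarrow> (a-1,b) \<in> P) \<and> ((a,b+int t) \<in> P \<longleftrightarrow> (a,b) \<in> P)"
    proof (induction t)
      case 0 then show ?case by simp
    next
      case (Suc t)
      have "((a-1,b+int t) \<in> P) \<noteq> ((a,b+int t) \<in> P)" using Suc d by blast
      from vprop[OF nc this] Suc show ?case by (simp add: ac_simps)
    qed
  qed
  thus False using d inf_col[OF f, of "a-1" b] inf_col[OF f, of a b] by blast
qed

lemma row_const:
  assumes f: "finite P" and nc: "\<And>s. (s, b) \<notin> corners P"
  shows "((a,b-1) \<in> P) = ((a,b) \<in> P)"
proof (rule ccontr)
  assume d: "((a,b-1) \<in> P) \<noteq> ((a,b) \<in> P)"
  have "\<forall>t::nat. ((a+int t,b-1) \<in> P \<longleftrightarrow> (a,b-1) \<in> P) \<and> ((a+int t,b) \<in> P \<longleftrightarrow> (a,b) \<in> P)"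
  proof
    fix t :: nat show "((a+int t,b-1) \<in> P \<longleftrightarrow> (a,b-1) \<in> P) \<and> ((a+int t,b) \<in> P \<longleftrightarrow> (a,b) \<in> P)"
    proof (induction t)
      case 0 then show ?case by simp
    next
      case (Suc t)
      have "((a+int t,b-1) \<in> P) \<noteq> ((a+int t,b) \<in> P)" using Suc d by blast
      from hprop[OF nc this] Suc show ?case by (simp add: ac_simps)
    qed
  qed
  thus False using d inf_row[OF f, of a "b-1"] inf_row[OF f, of a b] by blast
qed

lemma blocky:
  assumes f: "finite P" and cp: "consistent_parity P"
  obtains p q where "\<And>c. c \<in> P \<longleftrightarrow> (p + 2*((fst c - p) div 2), q + 2 * ((snd c - q) div 2)) \<in> P"
proof -
  obtain p where p: "\<forall>v\<in>corners P. fst v mod 2 = p" using cp unfolding consistent_parity_def by blast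
  obtain q where q: "\<forall>v\<in>corners P. snd v mod 2 = q" using cp unfolding consistent_parity_def by blast
  have colc: "\<And>x y. x mod 2 \<noteq> p mod 2 \<Longrightarrow> ((x-1,y) \<in> P) = ((x,y) \<in> P)"
  proof -
    fix x y :: int assume x: "x mod 2 \<noteq> p mod 2"
    have "\<And>t. (x,t) \<notin> corners P"
    proof
      fix t assume "(x,t) \<in> corners P"
      hence "x mod 2 = p" using p by force
      thus False using x by simp
    qed
    thus "((x-1,y) \<in> P) = ((x,y) \<in> P)" using col_const[OF f] by blast
  qed
  have rowc: "\<And>x y. y mod 2 \<noteq> q mod 2 \<Longrightarrow> ((x,y-1) \<in> P) = ((x,y) \<in> P)"
  proof -
    fix x y :: int assume y: "y mod 2 \<noteq> q mod 2"
    have "\<And>s. (s,y) \<notin> corners P"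
    proof
      fix s assume "(s,y) \<in> corners P"
      hence "y mod 2 = q" using q by force
      thus False using y by simp
    qed
    thus "((x,y-1) \<in> P) = ((x,y) \<in> P)" using row_const[OF f] by blast
  qed
  have "\<And>c. c \<in> P \<longleftrightarrow> (p + 2*((fst c - p) div 2), q + 2 * ((snd c - q) div 2)) \<in> P"
  proof -
    fix c :: cell
    obtain x y where c: "c = (x,y)" by fastforce
    define x0 where "x0 = p + 2*((x - p) div 2)"
    define y0 where "y0 = q + 2*((y - q) div 2)"
    have hx: "x = x0 \<or> (x = x0 + 1 \<and> x mod 2 \<noteq> p mod 2)" unfolding x0_def by presburger
    have hy: "y = y0 \<or> (y = y0 + 1 \<and> y mod 2 \<noteq> q mod 2)" unfolding y0_def by presburger
    have e1: "((x,y) \<in> P) = ((x0,y) \<in> P)" using hx colc[of x y] by auto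
    have e2: "((x0,y) \<in> P) = ((x0,y0) \<in> P)" using hy rowc[of y x0] by auto
    show "c \<in> P \<longleftrightarrow> (p + 2*((fst c - p) div 2), q + 2 * ((snd c - q) div 2)) \<in> P"
      using e1 e2 unfolding c x0_def y0_def by simp
  qed
  thus ?thesis using that by blast
qed

definition blk :: "int \<Rightarrow> int \<Rightarrow> cell \<Rightarrow> int \<times> int" where
  "blk p q c = ((fst c - p) div 2, (snd c - q) div 2)"

lemma blk_adj: "cell_adj u v \<Longrightarrow> blk p q u = blk p q v \<or> cell_adj (blk p q u) (blk p q v)"
proof -
  assume "cell_adj u v"
  then have "v = (fst u + 1, snd u) \<or> v = (fst u - 1, snd u) \<or> v = (fst u, snd u + 1) \<or> v = (fst u, snd u - 1)"
    unfolding adj4 .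
  moreover have "\<And>x::int. (x + 1 - p) div 2 = (x - p) div 2 \<or> (x + 1 - p) div 2 = (x - p) div 2 + 1" by presburger
  moreover have "\<And>x::int. (x - 1 - p) div 2 = (x - p) div 2 \<or> (x - 1 - p) div 2 = (x - p) div 2 - 1" by presburger
  moreover have "\<And>x::int. (x + 1 - q) div 2 = (x - q) div 2 \<or> (x + 1 - q) div 2 = (x - q) div 2 + 1" by presburger
  moreover have "\<And>x::int. (x - 1 - q) div 2 = (x - q) div 2 \<or> (x - 1 - q) div 2 = (x - q) div 2 - 1" by presburger
  ultimately show ?thesis unfolding blk_def adj4 by (elim disjE) (auto simp: algebra_simps)
qed

lemma conn_blocks:
  assumes gc: "graph_connected P" and PQ: "\<And>c. c \<in> P \<longleftrightarrow> blk p q c \<in> Q"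
    and QP: "\<And>X. X \<in> Q \<longleftrightarrow> (p + 2 * fst X, q + 2 * snd X) \<in> P"
  shows "graph_connected Q"
  unfolding graph_connected_def
proof (intro ballI)
  fix X Y assume X: "X \<in> Q" and Y: "Y \<in> Q"
  define cx where "cx = (p + 2 * fst X, q + 2 * snd X)"
  define cy where "cy = (p + 2 * fst Y, q + 2 * snd Y)"
  have bx: "blk p q cx = X" unfolding cx_def blk_def by simp
  have by': "blk p q cy = Y" unfolding cy_def blk_def by simp
  have "(\<lambda>u v. u \<in> P \<and> v \<in> P \<and> cell_adj u v)\<^sup>*\<^sup>* cx cy"
    using gc X Y QP unfolding graph_connected_def cx_def cy_def by blast
  hence "(\<lambda>u v. u \<in> Q \<and> v \<in> Q \<and> cell_adj u v)\<^sup>*\<^sup>* (blk p q cx) (blk p q cy)"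
  proof (induction rule: rtranclp_induct)
    case base then show ?case by simp
  next
    case (step y z)
    have "blk p q y \<in> Q" "blk p q z \<in> Q" using step(2) PQ by auto
    moreover have "blk p q y = blk p q z \<or> cell_adj (blk p q y) (blk p q z)" using blk_adj step(2) by blast
    ultimately show ?case using step(3)
      by (metis (mono_tags, lifting) rtranclp.rtrancl_into_rtrancl)
  qed
  thus "(\<lambda>u v. u \<in> Q \<and> v \<in> Q \<and> cell_adj u v)\<^sup>*\<^sup>* X Y" using bx by' by simp
qed

definition cen :: "cell \<Rightarrow> real \<times> real" where
  "cen c = (of_int (fst c) + 1/2, of_int (snd c) + 1/2)"

lemma int_lt1: "(of_int c::real) < of_int d + 1 \<Longrightarrow> c \<le> d"
proof -
  assume "(of_int c::real) < of_int d + 1"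
  hence "(of_int c::real) < of_int (d + 1)" by simp
  hence "c < d + 1" by (simp only: of_int_less_iff)
  thus "c \<le> d" by simp
qed

lemma int_lt2: "(of_int k::real) < 2 \<Longrightarrow> k \<le> 1"
proof -
  assume "(of_int k::real) < 2"
  hence "(of_int k::real) < of_int 2" by simp
  hence "k < 2" by (simp only: of_int_less_iff)
  thus "k \<le> 1" by simp
qed

lemma open_in_pts: "x \<in> cell_open c \<Longrightarrow> x \<in> cell_pts d \<Longrightarrow> d = c"
proof -
  assume a: "x \<in> cell_open c" "x \<in> cell_pts d"
  obtain u v where x: "x = (u,v)" by fastforce
  have "of_int (fst c) < u" "u < of_int (fst c) + 1" "of_int (fst d) \<le> u" "u \<le> of_int (fst d) + 1"
       "of_int (snd c) < v" "v < of_int (snd c) + 1" "of_int (snd d) \<le> v" "v \<le> of_int (snd d) + 1"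
    using a unfolding x cell_open_def cell_pts_def by auto
  hence "fst c \<le> fst d" "fst d \<le> fst c" "snd c \<le> snd d" "snd d \<le> snd c"
    using int_lt1 by (metis less_le_trans le_less_trans)+
  thus "d = c" by (simp add: prod_eq_iff)
qed

lemma cen_open: "cen c \<in> cell_open c"
  unfolding cen_def cell_open_def by auto

lemma open_sub: "cell_open c \<subseteq> cell_pts c"
  unfolding cell_open_def cell_pts_def by auto

lemma region_open: "c \<in> P \<Longrightarrow> cell_open c \<subseteq> region P"
  unfolding region_def using open_sub by blast

lemma open_notin: "c \<notin> P \<Longrightarrow> x \<in> cell_open c \<Longrightarrow> x \<notin> region P"
  unfolding region_def using open_in_pts by blast

lemma open_in_region: "x \<in> cell_open c \<Longrightarrow> x \<in> region P \<Longrightarrow> c \<in> P"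
  using open_notin by blast

lemma dinf_nonneg: "0 \<le> dinf x y"
  unfolding dinf_def by simp

lemma setdist_le: "y \<in> A \<Longrightarrow> dinf x y \<le> r \<Longrightarrow> setdist_inf x A \<le> r"
  unfolding setdist_inf_def
  by (rule cInf_lower2[of "dinf x y"]) (auto intro: bdd_belowI[of _ 0] simp: dinf_nonneg)

lemma setdist_lt: "A \<noteq> {} \<Longrightarrow> setdist_inf x A \<le> 1 \<Longrightarrow> \<exists>y\<in>A. dinf x y < 5/4"
proof -
  assume "A \<noteq> {}" "setdist_inf x A \<le> 1"
  hence "Inf (dinf x ` A) < 5/4" "dinf x ` A \<noteq> {}" unfolding setdist_inf_def by auto
  from cInf_lessD[OF this(2) this(1)] show ?thesis by blast
qed

lemma near_from_pt:
  assumes "dinf (cen c) y < 5/4" "y \<in> cell_pts d"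
  shows "\<bar>fst c - fst d\<bar> \<le> 1 \<and> \<bar>snd c - snd d\<bar> \<le> 1"
proof -
  obtain u v where y: "y = (u,v)" by fastforce
  have h: "\<bar>of_int (fst c) + 1/2 - u\<bar> < 5/4" "\<bar>of_int (snd c) + 1/2 - v\<bar> < 5/4"
    using assms(1) unfolding y dinf_def cen_def fst_conv snd_conv max_less_iff_conj by blast+
  have g: "of_int (fst d) \<le> u" "u \<le> of_int (fst d) + 1" "of_int (snd d) \<le> v" "v \<le> of_int (snd d) + 1"
    using assms(2) unfolding y cell_pts_def by auto
  have "(of_int (fst c - fst d)::real) < 2" "(of_int (fst d - fst c)::real) < 2"
       "(of_int (snd c - snd d)::real) < 2" "(of_int (snd d - snd c)::real) < 2"
    using h g unfolding abs_less_iff of_int_diff by linarith+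
  hence "fst c - fst d \<le> 1" "fst d - fst c \<le> 1" "snd c - snd d \<le> 1" "snd d - snd c \<le> 1"
    using int_lt2 by blast+
  thus ?thesis by auto
qed

lemma clamp1:
  fixes u :: real and c d :: int
  assumes "of_int c < u" "u < of_int c + 1" "\<bar>c - d\<bar> \<le> 1"
  shows "\<bar>u - max (of_int d) (min (of_int d + 1) u)\<bar> \<le> 1"
proof -
  have "(of_int (c - d)::real) \<le> 1" "(of_int (d - c)::real) \<le> 1" using assms(3) by linarith+
  thus ?thesis using assms(1,2) by (auto simp: max_def min_def abs_if)
qed

lemma Binf_pos: "Binf A 1 = {x. setdist_inf x A \<le> 1}"
  unfolding Binf_def by simp

lemma Binf_neg: "Binf A (-1) = - {x. setdist_inf x (- A) \<le> 1}"
  unfolding Binf_def by simp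

lemma ring_out:
  assumes ne: "P \<noteq> {}"
  shows "cells_of (Binf (region P) 1 - region P) = {c. c \<notin> P \<and> (\<exists>d\<in>P. \<bar>fst c - fst d\<bar> \<le> 1 \<and> \<bar>snd c - snd d\<bar> \<le> 1)}"
proof (rule set_eqI)
  fix c
  show "c \<in> cells_of (Binf (region P) 1 - region P) \<longleftrightarrow> c \<in> {c. c \<notin> P \<and> (\<exists>d\<in>P. \<bar>fst c - fst d\<bar> \<le> 1 \<and> \<bar>snd c - snd d\<bar> \<le> 1)}"
  proof
    assume "c \<in> cells_of (Binf (region P) 1 - region P)"
    hence s: "cen c \<in> Binf (region P) 1 - region P" using cen_open unfolding cells_of_def by blast
    hence cP: "c \<notin> P" using region_open cen_open by blast
    have rne: "region P \<noteq> {}" using ne region_open cen_open by blast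
    obtain y where y: "y \<in> region P" "dinf (cen c) y < 5/4" using setdist_lt[OF rne] s unfolding Binf_pos by blast
    then obtain d where d: "d \<in> P" "y \<in> cell_pts d" unfolding region_def by blast
    show "c \<in> {c. c \<notin> P \<and> (\<exists>d\<in>P. \<bar>fst c - fst d\<bar> \<le> 1 \<and> \<bar>snd c - snd d\<bar> \<le> 1)}"
      using cP d near_from_pt[OF y(2) d(2)] by blast
  next
    assume "c \<in> {c. c \<notin> P \<and> (\<exists>d\<in>P. \<bar>fst c - fst d\<bar> \<le> 1 \<and> \<bar>snd c - snd d\<bar> \<le> 1)}"
    then obtain d where cP: "c \<notin> P" and d: "d \<in> P" "\<bar>fst c - fst d\<bar> \<le> 1" "\<bar>snd c - snd d\<bar> \<le> 1" by blast
    have "cell_open c \<subseteq> Binf (region P) 1 - region P"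
    proof
      fix x assume x: "x \<in> cell_open c"
      obtain u v where xe: "x = (u,v)" by fastforce
      have uv: "of_int (fst c) < u" "u < of_int (fst c) + 1" "of_int (snd c) < v" "v < of_int (snd c) + 1"
        using x unfolding xe cell_open_def by auto
      define y where "y = (max (of_int (fst d)) (min (of_int (fst d) + 1) u), max (of_int (snd d)) (min (of_int (snd d) + 1) v))"
      have "y \<in> cell_pts d" unfolding y_def cell_pts_def by auto
      hence yr: "y \<in> region P" using d(1) unfolding region_def by blast
      have "dinf x y \<le> 1" unfolding dinf_def xe y_def using clamp1[OF uv(1,2) d(2)] clamp1[OF uv(3,4) d(3)] by simp
      hence "setdist_inf x (region P) \<le> 1" using setdist_le yr by blast
      moreover have "x \<notin> region P" using open_notin[OF cP x] .
      ultimately show "x \<in> Binf (region P) 1 - region P" unfolding Binf_pos by blast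
    qed
    thus "c \<in> cells_of (Binf (region P) 1 - region P)" unfolding cells_of_def by blast
  qed
qed

lemma ring_in:
  assumes fin: "finite P"
  shows "cells_of (region P - Binf (region P) (-1)) = {c. c \<in> P \<and> (\<exists>d. d \<notin> P \<and> \<bar>fst c - fst d\<bar> \<le> 1 \<and> \<bar>snd c - snd d\<bar> \<le> 1)}"
proof (rule set_eqI)
  fix c
  show "c \<in> cells_of (region P - Binf (region P) (-1)) \<longleftrightarrow> c \<in> {c. c \<in> P \<and> (\<exists>d. d \<notin> P \<and> \<bar>fst c - fst d\<bar> \<le> 1 \<and> \<bar>snd c - snd d\<bar> \<le> 1)}"
  proof
    assume "c \<in> cells_of (region P - Binf (region P) (-1))"
    hence s: "cen c \<in> region P - Binf (region P) (-1)" using cen_open unfolding cells_of_def by blast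
    hence cP: "c \<in> P" using open_in_region cen_open by blast
    obtain t :: nat where t: "(int t, 0) \<notin> P" using inf_row[OF fin, of 0 0] by auto
    have rne: "- region P \<noteq> {}" using open_notin[OF t cen_open] by blast
    obtain y where y: "y \<notin> region P" "dinf (cen c) y < 5/4" using setdist_lt[OF rne] s unfolding Binf_neg by blast
    define e where "e = (floor (fst y), floor (snd y))"
    have ye: "y \<in> cell_pts e" unfolding e_def cell_pts_def by (cases y) auto
    hence eP: "e \<notin> P" using y(1) unfolding region_def by blast
    show "c \<in> {c. c \<in> P \<and> (\<exists>d. d \<notin> P \<and> \<bar>fst c - fst d\<bar> \<le> 1 \<and> \<bar>snd c - snd d\<bar> \<le> 1)}"
      using cP eP near_from_pt[OF y(2) ye] by blast
  next
    assume "c \<in> {c. c \<in> P \<and> (\<exists>d. d \<notin> P \<and> \<bar>fst c - fst d\<bar> \<le> 1 \<and> \<bar>snd c - snd d\<bar> \<le> 1)}"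
    then obtain d where cP: "c \<in> P" and d: "d \<notin> P" "\<bar>fst c - fst d\<bar> \<le> 1" "\<bar>snd c - snd d\<bar> \<le> 1" by blast
    have "cell_open c \<subseteq> region P - Binf (region P) (-1)"
    proof
      fix x assume x: "x \<in> cell_open c"
      obtain u v where xe: "x = (u,v)" by fastforce
      define y where "y = (u + of_int (fst d - fst c), v + of_int (snd d - snd c))"
      have "y \<in> cell_open d" using x unfolding y_def xe cell_open_def by auto
      hence yr: "y \<notin> region P" using open_notin[OF d(1)] by blast
      have "\<bar>(of_int (fst d - fst c)::real)\<bar> \<le> 1" "\<bar>(of_int (snd d - snd c)::real)\<bar> \<le> 1"
        using d(2,3) by linarith+
      hence "dinf x y \<le> 1" unfolding dinf_def xe y_def by (simp add: abs_minus_commute)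
      hence "setdist_inf x (- region P) \<le> 1" using setdist_le yr by blast
      moreover have "x \<in> region P" using region_open[OF cP] x by blast
      ultimately show "x \<in> region P - Binf (region P) (-1)" unfolding Binf_neg by blast
    qed
    thus "c \<in> cells_of (region P - Binf (region P) (-1))" unfolding cells_of_def by blast
  qed
qed

definition bpts :: "int \<Rightarrow> int \<Rightarrow> int \<times> int \<Rightarrow> (real \<times> real) set" where
  "bpts p q X = {(x,y). of_int (p + 2 * fst X) \<le> x \<and> x \<le> of_int (p + 2 * fst X) + 2 \<and>
                         of_int (q + 2 * snd X) \<le> y \<and> y \<le> of_int (q + 2 * snd X) + 2}"

lemma oi_le: "(of_int a::real) \<le> of_int b + 1 \<Longrightarrow> a \<le> b + 1"
proof -
  assume "(of_int a::real) \<le> of_int b + 1"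
  hence "(of_int a::real) \<le> of_int (b + 1)" by simp
  thus ?thesis by (simp only: of_int_le_iff)
qed

lemma oi_le2: "(of_int a::real) \<le> of_int b + 2 \<Longrightarrow> a \<le> b + 2"
proof -
  assume "(of_int a::real) \<le> of_int b + 2"
  hence "(of_int a::real) \<le> of_int (b + 2)" by simp
  thus ?thesis by (simp only: of_int_le_iff)
qed

lemma regQ:
  assumes PQ: "\<And>c. c \<in> P \<longleftrightarrow> blk p q c \<in> Q"
  shows "region P = \<Union> (bpts p q ` Q)"
proof
  show "region P \<subseteq> \<Union> (bpts p q ` Q)"
  proof
    fix z assume "z \<in> region P"
    then obtain c where c: "c \<in> P" "z \<in> cell_pts c" unfolding region_def by blast
    obtain u v where z: "z = (u,v)" by fastforce
    have i1: "p + 2 * ((fst c - p) div 2) \<le> fst c" "fst c + 1 \<le> p + 2 * ((fst c - p) div 2) + 2" by presburger+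
    have i2: "q + 2 * ((snd c - q) div 2) \<le> snd c" "snd c + 1 \<le> q + 2 * ((snd c - q) div 2) + 2" by presburger+
    have r1: "(of_int (p + 2 * ((fst c - p) div 2))::real) \<le> of_int (fst c)"
             "(of_int (fst c + 1)::real) \<le> of_int (p + 2 * ((fst c - p) div 2) + 2)"
      using i1 by (simp only: of_int_le_iff)+
    have r2: "(of_int (q + 2 * ((snd c - q) div 2))::real) \<le> of_int (snd c)"
             "(of_int (snd c + 1)::real) \<le> of_int (q + 2 * ((snd c - q) div 2) + 2)"
      using i2 by (simp only: of_int_le_iff)+
    have "z \<in> bpts p q (blk p q c)"
      using c(2) r1 r2 unfolding z bpts_def blk_def cell_pts_def by auto
    moreover have "blk p q c \<in> Q" using PQ c(1) by blast
    ultimately show "z \<in> \<Union> (bpts p q ` Q)" by blast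
  qed
next
  show "\<Union> (bpts p q ` Q) \<subseteq> region P"
  proof
    fix z assume "z \<in> \<Union> (bpts p q ` Q)"
    then obtain X where X: "X \<in> Q" "z \<in> bpts p q X" by blast
    obtain u v where z: "z = (u,v)" by fastforce
    define bx where "bx = p + 2 * fst X"
    define by' where "by' = q + 2 * snd X"
    define e1 where "e1 = (if u \<le> of_int bx + 1 then bx else bx + 1)"
    define e2 where "e2 = (if v \<le> of_int by' + 1 then by' else by' + 1)"
    have hu: "of_int bx \<le> u" "u \<le> of_int bx + 2" "of_int by' \<le> v" "v \<le> of_int by' + 2"
      using X(2) unfolding z bpts_def bx_def by'_def by auto
    have "z \<in> cell_pts (e1, e2)" unfolding z cell_pts_def e1_def e2_def using hu by auto
    moreover have "blk p q (e1, e2) = X" unfolding blk_def e1_def e2_def bx_def by'_def by (auto simp: prod_eq_iff)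
    hence "(e1,e2) \<in> P" using PQ X(1) by blast
    ultimately show "z \<in> region P" unfolding region_def by blast
  qed
qed

lemma loc1:
  fixes t :: real and p :: int
  shows "\<exists>d>0. \<forall>s. \<bar>s - t\<bar> < d \<longrightarrow> (\<exists>k::int. of_int (p + 2*k) \<le> t \<and> t \<le> of_int (p + 2*k) + 2 \<and>
                                              of_int (p + 2*k) \<le> s \<and> s \<le> of_int (p + 2*k) + 2)"
proof -
  define k0 where "k0 = floor ((t - of_int p) / 2)"
  have f1: "of_int k0 \<le> (t - of_int p) / 2" "(t - of_int p) / 2 < of_int k0 + 1"
    unfolding k0_def using floor_correct[of "(t - of_int p) / 2"] by simp_all
  define lo where "lo = (of_int (p + 2*k0) :: real)"
  have lo: "lo \<le> t" "t < lo + 2" using f1 unfolding lo_def by auto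
  show ?thesis
  proof (cases "t = lo")
    case True
    have "\<forall>s. \<bar>s - t\<bar> < 1 \<longrightarrow> (\<exists>k::int. of_int (p + 2*k) \<le> t \<and> t \<le> of_int (p + 2*k) + 2 \<and>
                                              of_int (p + 2*k) \<le> s \<and> s \<le> of_int (p + 2*k) + 2)"
    proof (intro allI impI)
      fix s :: real assume s: "\<bar>s - t\<bar> < 1"
      show "\<exists>k::int. of_int (p + 2*k) \<le> t \<and> t \<le> of_int (p + 2*k) + 2 \<and> of_int (p + 2*k) \<le> s \<and> s \<le> of_int (p + 2*k) + 2"
      proof (cases "s \<ge> lo")
        case True thus ?thesis using s lo \<open>t = lo\<close> unfolding lo_def by (intro exI[of _ k0]) (auto simp: abs_less_iff)
      next
        case False
        have "(of_int (p + 2*(k0-1))::real) = lo - 2" unfolding lo_def by simp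
        thus ?thesis using False s lo \<open>t = lo\<close> by (intro exI[of _ "k0-1"]) (auto simp: abs_less_iff)
      qed
    qed
    thus ?thesis by (intro exI[of _ 1]) auto
  next
    case False
    hence lt: "lo < t" using lo by simp
    define d where "d = min (t - lo) (lo + 2 - t)"
    have "d > 0" unfolding d_def using lt lo by simp
    moreover have "\<forall>s. \<bar>s - t\<bar> < d \<longrightarrow> (\<exists>k::int. of_int (p + 2*k) \<le> t \<and> t \<le> of_int (p + 2*k) + 2 \<and>
                                              of_int (p + 2*k) \<le> s \<and> s \<le> of_int (p + 2*k) + 2)"
    proof (intro allI impI)
      fix s :: real assume s: "\<bar>s - t\<bar> < d"
      show "\<exists>k::int. of_int (p + 2*k) \<le> t \<and> t \<le> of_int (p + 2*k) + 2 \<and> of_int (p + 2*k) \<le> s \<and> s \<le> of_int (p + 2*k) + 2"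
        using s lo unfolding d_def lo_def by (intro exI[of _ k0]) (auto simp: abs_less_iff)
    qed
    ultimately show ?thesis by blast
  qed
qed

lemma loc2: "\<exists>d>0. \<forall>w. dist w z < d \<longrightarrow> (\<exists>X. z \<in> bpts p q X \<and> w \<in> bpts p q X)"
proof -
  obtain d1 where d1: "d1 > 0" "\<forall>s. \<bar>s - fst z\<bar> < d1 \<longrightarrow> (\<exists>k::int. of_int (p + 2*k) \<le> fst z \<and> fst z \<le> of_int (p + 2*k) + 2 \<and>
                                              of_int (p + 2*k) \<le> s \<and> s \<le> of_int (p + 2*k) + 2)"
    using loc1[of "fst z" p] by blast
  obtain d2 where d2: "d2 > 0" "\<forall>s. \<bar>s - snd z\<bar> < d2 \<longrightarrow> (\<exists>k::int. of_int (q + 2*k) \<le> snd z \<and> snd z \<le> of_int (q + 2*k) + 2 \<and>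
                                              of_int (q + 2*k) \<le> s \<and> s \<le> of_int (q + 2*k) + 2)"
    using loc1[of "snd z" q] by blast
  have "\<forall>w. dist w z < min d1 d2 \<longrightarrow> (\<exists>X. z \<in> bpts p q X \<and> w \<in> bpts p q X)"
  proof (intro allI impI)
    fix w assume w: "dist w z < min d1 d2"
    have "\<bar>fst w - fst z\<bar> < d1" using dist_fst_le[of w z] w unfolding dist_real_def by simp
    then obtain k1 where k1: "of_int (p + 2*k1) \<le> fst z \<and> fst z \<le> of_int (p + 2*k1) + 2 \<and>
                                              of_int (p + 2*k1) \<le> fst w \<and> fst w \<le> of_int (p + 2*k1) + 2" using d1 by blast
    have "\<bar>snd w - snd z\<bar> < d2" using dist_snd_le[of w z] w unfolding dist_real_def by simp
    then obtain k2 where k2: "of_int (q + 2*k2) \<le> snd z \<and> snd z \<le> of_int (q + 2*k2) + 2 \<and>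
                                              of_int (q + 2*k2) \<le> snd w \<and> snd w \<le> of_int (q + 2*k2) + 2" using d2 by blast
    have "z \<in> bpts p q (k1,k2) \<and> w \<in> bpts p q (k1,k2)" using k1 k2 unfolding bpts_def by (cases z, cases w) auto
    thus "\<exists>X. z \<in> bpts p q X \<and> w \<in> bpts p q X" by blast
  qed
  thus ?thesis using d1(1) d2(1) by (intro exI[of _ "min d1 d2"]) auto
qed

lemma center_bpts: "(of_int (p + 2 * fst Y) + 1, of_int (q + 2 * snd Y) + 1) \<in> bpts p q Y"
  unfolding bpts_def by auto

lemma center_uniq:
  assumes "(of_int (p + 2 * fst Y) + 1, of_int (q + 2 * snd Y) + 1) \<in> bpts p q X"
  shows "X = Y"
proof -
  have a: "(of_int (p + 2 * fst X)::real) \<le> of_int (p + 2 * fst Y) + 1"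
          "(of_int (p + 2 * fst Y)::real) + 1 \<le> of_int (p + 2 * fst X) + 2"
          "(of_int (q + 2 * snd X)::real) \<le> of_int (q + 2 * snd Y) + 1"
          "(of_int (q + 2 * snd Y)::real) + 1 \<le> of_int (q + 2 * snd X) + 2"
    using assms unfolding bpts_def by auto
  have "p + 2 * fst X \<le> p + 2 * fst Y + 1" "q + 2 * snd X \<le> q + 2 * snd Y + 1"
    using oi_le a(1,3) by blast+
  moreover have "(of_int (p + 2 * fst Y)::real) \<le> of_int (p + 2 * fst X) + 1"
                "(of_int (q + 2 * snd Y)::real) \<le> of_int (q + 2 * snd X) + 1" using a(2,4) by linarith+
  hence "p + 2 * fst Y \<le> p + 2 * fst X + 1" "q + 2 * snd Y \<le> q + 2 * snd X + 1"
    using oi_le by blast+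
  ultimately show "X = Y" by (simp add: prod_eq_iff)
qed

lemma bpts_close:
  assumes "w \<in> bpts p q W" "w \<in> bpts p q Y"
  shows "\<bar>fst W - fst Y\<bar> \<le> 1 \<and> \<bar>snd W - snd Y\<bar> \<le> 1"
proof -
  have a: "(of_int (p + 2 * fst W)::real) \<le> of_int (p + 2 * fst Y) + 2"
          "(of_int (p + 2 * fst Y)::real) \<le> of_int (p + 2 * fst W) + 2"
          "(of_int (q + 2 * snd W)::real) \<le> of_int (q + 2 * snd Y) + 2"
          "(of_int (q + 2 * snd Y)::real) \<le> of_int (q + 2 * snd W) + 2"
    using assms unfolding bpts_def by (cases w; auto)+
  have "p + 2 * fst W \<le> p + 2 * fst Y + 2" "p + 2 * fst Y \<le> p + 2 * fst W + 2"
       "q + 2 * snd W \<le> q + 2 * snd Y + 2" "q + 2 * snd Y \<le> q + 2 * snd W + 2"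
    using oi_le2 a by blast+
  thus ?thesis by auto
qed

abbreviation RQ :: "(int\<times>int) set \<Rightarrow> int\<times>int \<Rightarrow> int\<times>int \<Rightarrow> bool" where
  "RQ Q \<equiv> (\<lambda>u v. u \<in> - Q \<and> v \<in> - Q \<and> cell_adj u v)"

lemma step_or_eq:
  assumes "u \<notin> Q" "v \<notin> Q" "(fst u = fst v \<and> \<bar>snd u - snd v\<bar> \<le> 1) \<or> (snd u = snd v \<and> \<bar>fst u - fst v\<bar> \<le> 1)"
  shows "(RQ Q)\<^sup>*\<^sup>* u v"
proof (cases "u = v")
  case True thus ?thesis by simp
next
  case False
  hence "cell_adj u v" using assms(3) unfolding cell_adj_def by (auto simp: prod_eq_iff)
  thus ?thesis using assms(1,2) by (intro r_into_rtranclp) auto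
qed

lemma share:
  assumes PQ: "\<And>c. c \<in> P \<longleftrightarrow> blk p q c \<in> Q"
    and W: "W \<notin> Q" and Y: "Y \<notin> Q" and w1: "w \<in> bpts p q W" and w2: "w \<in> bpts p q Y" and wr: "w \<notin> region P"
  shows "(RQ Q)\<^sup>*\<^sup>* W Y"
proof -
  define M where "M = (fst Y, snd W)"
  have cl: "\<bar>fst W - fst Y\<bar> \<le> 1 \<and> \<bar>snd W - snd Y\<bar> \<le> 1" using bpts_close[OF w1 w2] .
  have "w \<in> bpts p q M" using w1 w2 unfolding M_def bpts_def by auto
  hence M: "M \<notin> Q" using wr regQ[OF PQ] by blast
  have "(RQ Q)\<^sup>*\<^sup>* W M" by (rule step_or_eq[OF W M]) (use cl in \<open>auto simp: M_def\<close>)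
  moreover have "(RQ Q)\<^sup>*\<^sup>* M Y" by (rule step_or_eq[OF M Y]) (use cl in \<open>auto simp: M_def\<close>)
  ultimately show ?thesis by (rule rtranclp_trans)
qed

lemma R_notQ: "(RQ Q)\<^sup>*\<^sup>* Z W \<Longrightarrow> Z \<notin> Q \<Longrightarrow> W \<notin> Q"
  by (induction rule: rtranclp_induct) auto

lemma conn_compl:
  assumes PQ: "\<And>c. c \<in> P \<longleftrightarrow> blk p q c \<in> Q" and con: "connected (- region P)"
  shows "graph_connected (- Q)"
  unfolding graph_connected_def
proof (intro ballI)
  fix Z Y assume Z: "Z \<in> - Q" and Y: "Y \<in> - Q"
  define C where "C = {X. (RQ Q)\<^sup>*\<^sup>* Z X}"
  have CnQ: "\<And>X. X \<in> C \<Longrightarrow> X \<notin> Q" unfolding C_def using R_notQ Z by blast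
  have reg: "region P = \<Union> (bpts p q ` Q)" using regQ[OF PQ] .
  define U where "U = - region P \<inter> \<Union> (bpts p q ` C)"
  have op: "openin (top_of_set (- region P)) U"
    unfolding openin_euclidean_subtopology_iff
  proof (intro conjI ballI)
    show "U \<subseteq> - region P" unfolding U_def by blast
  next
    fix x assume x: "x \<in> U"
    then obtain W0 where W0: "W0 \<in> C" "x \<in> bpts p q W0" "x \<notin> region P" unfolding U_def by blast
    obtain d where d: "d > 0" "\<forall>w. dist w x < d \<longrightarrow> (\<exists>X. x \<in> bpts p q X \<and> w \<in> bpts p q X)"
      using loc2[of x p q] by blast
    have "\<forall>x'\<in>- region P. dist x' x < d \<longrightarrow> x' \<in> U"
    proof (intro ballI impI)
      fix x' assume x': "x' \<in> - region P" "dist x' x < d"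
      then obtain X where X: "x \<in> bpts p q X" "x' \<in> bpts p q X" using d by blast
      have XQ: "X \<notin> Q"
      proof
        assume "X \<in> Q" hence "x' \<in> region P" using X(2) reg by blast
        thus False using x'(1) by blast
      qed
      have "(RQ Q)\<^sup>*\<^sup>* W0 X" using share[OF PQ CnQ[OF W0(1)] XQ W0(2) X(1) W0(3)] .
      hence "X \<in> C" using W0(1) unfolding C_def by (simp add: rtranclp_trans[of _ Z W0 X])
      thus "x' \<in> U" unfolding U_def using X(2) x'(1) by blast
    qed
    thus "\<exists>e>0. \<forall>x'\<in>- region P. dist x' x < e \<longrightarrow> x' \<in> U" using d(1) by blast
  qed
  have cl: "closedin (top_of_set (- region P)) U"
    unfolding closedin_def topspace_euclidean_subtopology
  proof (intro conjI)
    show "U \<subseteq> - region P" unfolding U_def by blast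
  next
    show "openin (top_of_set (- region P)) (- region P - U)"
      unfolding openin_euclidean_subtopology_iff
    proof (intro conjI ballI)
      show "- region P - U \<subseteq> - region P" by blast
    next
      fix x assume x: "x \<in> - region P - U"
      obtain d where d: "d > 0" "\<forall>w. dist w x < d \<longrightarrow> (\<exists>X. x \<in> bpts p q X \<and> w \<in> bpts p q X)"
        using loc2[of x p q] by blast
      have "\<forall>x'\<in>- region P. dist x' x < d \<longrightarrow> x' \<in> - region P - U"
      proof (intro ballI impI)
        fix x' assume x': "x' \<in> - region P" "dist x' x < d"
        then obtain X where X: "x \<in> bpts p q X" "x' \<in> bpts p q X" using d by blast
        have XQ: "X \<notin> Q"
      proof
        assume "X \<in> Q" hence "x' \<in> region P" using X(2) reg by blast
        thus False using x'(1) by blast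
      qed
        show "x' \<in> - region P - U"
        proof (rule ccontr)
          assume "x' \<notin> - region P - U"
          hence "x' \<in> U" using x'(1) by blast
          then obtain W where W: "W \<in> C" "x' \<in> bpts p q W" unfolding U_def by blast
          have x'r: "x' \<notin> region P" using x'(1) by blast
          have "(RQ Q)\<^sup>*\<^sup>* W X" using share[OF PQ CnQ[OF W(1)] XQ W(2) X(2) x'r] .
          hence "X \<in> C" using W(1) unfolding C_def by (simp add: rtranclp_trans[of _ Z W X])
          hence "x \<in> U" unfolding U_def using X(1) x by blast
          thus False using x by blast
        qed
      qed
      thus "\<exists>e>0. \<forall>x'\<in>- region P. dist x' x < e \<longrightarrow> x' \<in> - region P - U" using d(1) by blast
    qed
  qed
  have cnot: "\<And>V. V \<notin> Q \<Longrightarrow> (of_int (p + 2 * fst V) + 1, of_int (q + 2 * snd V) + 1) \<notin> region P"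
  proof
    fix V assume V: "V \<notin> Q" and "(of_int (p + 2 * fst V) + 1, of_int (q + 2 * snd V) + 1) \<in> region P"
    then obtain X where "X \<in> Q" "(of_int (p + 2 * fst V) + 1, of_int (q + 2 * snd V) + 1) \<in> bpts p q X"
      using reg by blast
    hence "X = V" using center_uniq by blast
    thus False using V \<open>X \<in> Q\<close> by blast
  qed
  have "Z \<in> C" unfolding C_def by simp
  moreover have "Z \<notin> Q" using Z by blast
  ultimately have "(of_int (p + 2 * fst Z) + 1, of_int (q + 2 * snd Z) + 1) \<in> U"
    unfolding U_def using center_bpts[of p Z q] cnot[of Z] by blast
  hence "U \<noteq> {}" by blast
  moreover have "U = {} \<or> U = - region P" using con op cl unfolding connected_clopen by blast
  ultimately have Ueq: "U = - region P" by blast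
  have "(of_int (p + 2 * fst Y) + 1, of_int (q + 2 * snd Y) + 1) \<in> U" using cnot[of Y] Y Ueq by blast
  then obtain W where "W \<in> C" "(of_int (p + 2 * fst Y) + 1, of_int (q + 2 * snd Y) + 1) \<in> bpts p q W"
    unfolding U_def by blast
  hence "W = Y" using center_uniq by blast
  hence "Y \<in> C" using \<open>W \<in> C\<close> by blast
  thus "(RQ Q)\<^sup>*\<^sup>* Z Y" unfolding C_def by blast
qed

lemma ham_shift:
  assumes h: "ham_cycle T vs" and TT: "\<And>c. c \<in> T' \<longleftrightarrow> (fst c - p, snd c - q) \<in> T"
  shows "ham_cycle T' (map (\<lambda>e. (fst e + p, snd e + q)) vs)"
proof -
  define g where "g = (\<lambda>e::cell. (fst e + p, snd e + q))"
  have ig: "inj g" unfolding g_def by (rule injI) (auto simp: prod_eq_iff)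
  have st: "g ` T = T'"
  proof
    show "g ` T \<subseteq> T'" using TT unfolding g_def by auto
  next
    show "T' \<subseteq> g ` T"
    proof
      fix c assume "c \<in> T'"
      hence "(fst c - p, snd c - q) \<in> T" using TT by blast
      moreover have "c = g (fst c - p, snd c - q)" unfolding g_def by simp
      ultimately show "c \<in> g ` T" by blast
    qed
  qed
  have adjg: "\<And>a b. cell_adj (g a) (g b) \<longleftrightarrow> cell_adj a b" unfolding g_def cell_adj_def by simp
  have h1: "distinct vs" "set vs = T" "length vs \<ge> 3" "\<forall>i < length vs. cell_adj (vs ! i) (vs ! (Suc i mod length vs))"
    using h unfolding ham_cycle_def by auto
  have "distinct (map g vs)" using h1(1) inj_on_subset[OF ig] by (simp add: distinct_map)
  moreover have "set (map g vs) = T'" using h1(2) st by simp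
  moreover have "\<forall>i < length (map g vs). cell_adj (map g vs ! i) (map g vs ! (Suc i mod length (map g vs)))"
  proof (intro allI impI)
    fix i assume i: "i < length (map g vs)"
    have "Suc i mod length vs < length vs" using i by (intro mod_less_divisor) auto
    thus "cell_adj (map g vs ! i) (map g vs ! (Suc i mod length (map g vs)))"
      using i h1(4) adjg by simp
  qed
  ultimately show ?thesis using h1(3) unfolding ham_cycle_def g_def by simp
qed

theorem lemma4:
  fixes P :: "cell set"
  assumes "polyomino P"
    and "graph_connected P"
    and "consistent_parity P"
    and "without_holes P"
  shows "(\<exists>vs. ham_cycle (cells_of (Binf (region P) 1 - region P)) vs \<and> even (length vs))
       \<and> (\<exists>vs. ham_cycle (cells_of (region P - Binf (region P) (-1))) vs \<and> even (length vs))"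
proof -
  have fin: "finite P" and ne: "P \<noteq> {}" using assms(1) unfolding polyomino_def by auto
  obtain p q where bl: "\<And>c. c \<in> P \<longleftrightarrow> (p + 2 * ((fst c - p) div 2), q + 2 * ((snd c - q) div 2)) \<in> P"
    using blocky[OF fin assms(3)] by blast
  define Q where "Q = {X. (p + 2 * fst X, q + 2 * snd X) \<in> P}"
  have QP: "\<And>X. X \<in> Q \<longleftrightarrow> (p + 2 * fst X, q + 2 * snd X) \<in> P" unfolding Q_def by simp
  have PQ: "\<And>c. c \<in> P \<longleftrightarrow> blk p q c \<in> Q" unfolding Q_def blk_def using bl by simp
  have gQ: "graph_connected Q" using conn_blocks[OF assms(2) PQ QP] .
  have gC: "graph_connected (- Q)" using conn_compl[OF PQ] assms(4) unfolding without_holes_def by blast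
  have gCC: "graph_connected (- (- Q))" using gQ by simp
  define sh where "sh = (\<lambda>c::cell. (fst c - p, snd c - q))"
  have inSsh: "\<And>c. inS Q (sh c) \<longleftrightarrow> c \<in> P" unfolding inS_def sh_def using PQ unfolding blk_def by simp
  have inSshC: "\<And>c. inS (- Q) (sh c) \<longleftrightarrow> c \<notin> P" unfolding inS_def sh_def using PQ unfolding blk_def by simp
  have shinv: "\<And>e. sh (fst e + p, snd e + q) = e" unfolding sh_def by simp
  define L1 where "L1 = {c. c \<notin> P \<and> (\<exists>d\<in>P. \<bar>fst c - fst d\<bar> \<le> 1 \<and> \<bar>snd c - snd d\<bar> \<le> 1)}"
  define Lm where "Lm = {c. c \<in> P \<and> (\<exists>d. d \<notin> P \<and> \<bar>fst c - fst d\<bar> \<le> 1 \<and> \<bar>snd c - snd d\<bar> \<le> 1)}"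
  have R1: "cells_of (Binf (region P) 1 - region P) = L1" unfolding L1_def by (rule ring_out[OF ne])
  have Rm: "cells_of (region P - Binf (region P) (-1)) = Lm" unfolding Lm_def by (rule ring_in[OF fin])
  have C1: "\<And>c. c \<in> L1 \<longleftrightarrow> sh c \<in> LS (- Q)"
  proof
    fix c assume "c \<in> L1"
    then obtain d where d: "c \<notin> P" "d \<in> P" "\<bar>fst c - fst d\<bar> \<le> 1" "\<bar>snd c - snd d\<bar> \<le> 1" unfolding L1_def by blast
    have "\<bar>fst (sh d) - fst (sh c)\<bar> \<le> 1 \<and> \<bar>snd (sh d) - snd (sh c)\<bar> \<le> 1 \<and> \<not> inS (- Q) (sh d)"
      using d inSshC unfolding sh_def by auto
    thus "sh c \<in> LS (- Q)" unfolding LS_def using inSshC d(1) by blast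
  next
    fix c assume "sh c \<in> LS (- Q)"
    then obtain e where e: "c \<notin> P" "\<bar>fst e - fst (sh c)\<bar> \<le> 1" "\<bar>snd e - snd (sh c)\<bar> \<le> 1" "\<not> inS (- Q) e"
      unfolding LS_def using inSshC by blast
    define d where "d = (fst e + p, snd e + q)"
    have "d \<in> P" using e(4) inSshC[of d] shinv unfolding d_def by simp
    moreover have "\<bar>fst c - fst d\<bar> \<le> 1" "\<bar>snd c - snd d\<bar> \<le> 1" using e(2,3) unfolding d_def sh_def by auto
    ultimately show "c \<in> L1" unfolding L1_def using e(1) by blast
  qed
  have Cm: "\<And>c. c \<in> Lm \<longleftrightarrow> sh c \<in> LS Q"
  proof
    fix c assume "c \<in> Lm"
    then obtain d where d: "c \<in> P" "d \<notin> P" "\<bar>fst c - fst d\<bar> \<le> 1" "\<bar>snd c - snd d\<bar> \<le> 1" unfolding Lm_def by blast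
    have "\<bar>fst (sh d) - fst (sh c)\<bar> \<le> 1 \<and> \<bar>snd (sh d) - snd (sh c)\<bar> \<le> 1 \<and> \<not> inS Q (sh d)"
      using d inSsh unfolding sh_def by auto
    thus "sh c \<in> LS Q" unfolding LS_def using inSsh d(1) by blast
  next
    fix c assume "sh c \<in> LS Q"
    then obtain e where e: "c \<in> P" "\<bar>fst e - fst (sh c)\<bar> \<le> 1" "\<bar>snd e - snd (sh c)\<bar> \<le> 1" "\<not> inS Q e"
      unfolding LS_def using inSsh by blast
    define d where "d = (fst e + p, snd e + q)"
    have "d \<notin> P" using e(4) inSsh[of d] shinv unfolding d_def by simp
    moreover have "\<bar>fst c - fst d\<bar> \<le> 1" "\<bar>snd c - snd d\<bar> \<le> 1" using e(2,3) unfolding d_def sh_def by auto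
    ultimately show "c \<in> Lm" unfolding Lm_def using e(1) by blast
  qed
  have LSsub1: "LS (- Q) \<subseteq> sh ` L1"
  proof
    fix e assume "e \<in> LS (- Q)"
    hence "(fst e + p, snd e + q) \<in> L1" using C1 shinv by simp
    thus "e \<in> sh ` L1" using shinv by (metis image_eqI)
  qed
  have LSsubm: "LS Q \<subseteq> sh ` Lm"
  proof
    fix e assume "e \<in> LS Q"
    hence "(fst e + p, snd e + q) \<in> Lm" using Cm shinv by simp
    thus "e \<in> sh ` Lm" using shinv by (metis image_eqI)
  qed
  have finLm: "finite Lm" using fin unfolding Lm_def by auto
  have L1sub: "L1 \<subseteq> (\<lambda>(d,i,j). (fst d + i, snd d + j)) ` (P \<times> {-1..1} \<times> {-1..1})"
  proof
    fix c assume "c \<in> L1"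
    then obtain d where d: "d \<in> P" "\<bar>fst c - fst d\<bar> \<le> 1" "\<bar>snd c - snd d\<bar> \<le> 1" unfolding L1_def by blast
    have "(d, fst c - fst d, snd c - snd d) \<in> P \<times> {-1..1} \<times> {-1..1}" using d by auto
    moreover have "c = (\<lambda>(d,i,j). (fst d + i, snd d + j)) (d, fst c - fst d, snd c - snd d)" by simp
    ultimately show "c \<in> (\<lambda>(d,i,j). (fst d + i, snd d + j)) ` (P \<times> {-1..1} \<times> {-1..1})" by blast
  qed
  have finL1: "finite L1" using finite_subset[OF L1sub] fin by blast
  have finLS1: "finite (LS (- Q))" using finite_subset[OF LSsub1] finL1 by blast
  have finLSm: "finite (LS Q)" using finite_subset[OF LSsubm] finLm by blast
  define m where "m = Max (fst ` P)"
  have "m \<in> fst ` P" unfolding m_def using fin ne by (intro Max_in) auto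
  then obtain c where c: "c \<in> P" "fst c = m" by auto
  have d: "(fst c + 1, snd c) \<notin> P"
  proof
    assume "(fst c + 1, snd c) \<in> P"
    hence "fst c + 1 \<le> m" unfolding m_def using fin by (metis Max_ge finite_imageI fst_conv image_eqI)
    thus False using c by simp
  qed
  have "c \<in> Lm" unfolding Lm_def using c d by (intro CollectI conjI exI[of _ "(fst c + 1, snd c)"]) auto
  hence neLSm: "LS Q \<noteq> {}" using Cm by blast
  have "(fst c + 1, snd c) \<in> L1" unfolding L1_def using c d by (intro CollectI conjI bexI[of _ c]) auto
  hence neLS1: "LS (- Q) \<noteq> {}" using C1 by blast
  obtain vs1 where v1: "ham_cycle (LS (- Q)) vs1" "even (length vs1)"
    using core_ham[OF finLS1 neLS1 gC gCC] by blast
  obtain vsm where vm: "ham_cycle (LS Q) vsm" "even (length vsm)"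
    using core_ham[OF finLSm neLSm gQ gC] by blast
  have "ham_cycle L1 (map (\<lambda>e. (fst e + p, snd e + q)) vs1)"
    by (rule ham_shift[OF v1(1)]) (use C1 in \<open>simp add: sh_def\<close>)
  moreover have "ham_cycle Lm (map (\<lambda>e. (fst e + p, snd e + q)) vsm)"
    by (rule ham_shift[OF vm(1)]) (use Cm in \<open>simp add: sh_def\<close>)
  ultimately show ?thesis unfolding R1 Rm using v1(2) vm(2) by auto
qed

end
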